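(* For every integer $N\ge1$ there exist $\delta_0>0$ and $C>0$, depending only on $N$, such that the following holds. Let $U_\varphi,V_\varphi\subset\mathbb R^2$ be open with $\overline B_\infty(0,1)=\{\max(|x_1|,|x_2|)\le1\}\subset U_\varphi\cap V_\varphi$, and let $\varphi:U_\varphi\to V_\varphi$ be a $C^{N+1}$ diffeomorphism onto its image with $\varphi(0)=0$, $d\varphi(0)=\mathrm{diag}(2,1/2)$, and $\sup_{U_\varphi}|\partial^\alpha\varphi|\le\delta$ for $2\le|\alpha|\le N+1$, where $0<\delta\le\delta_0$. Let $1\le k\le N$ and let $F\in C^k([-1,1];\mathbb R)$ satisfy $F(0)=0$ and $\|F\|_{C^k}\le1$. Then $$\|\Phi_uF\|_{C^k}\le \tfrac14\|F\|_{C^k}+C\delta.$$ If additionally $\|F\|_{C^{k,1}}\le 1$, then $$\|\Phi_uF\|_{C^{k,1}}\le\tfrac14\|F\|_{C^{k,1}}+C\delta.$$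
   Context: For $H:[-1,1]\to\mathbb R$ let $\mathcal G_u(H):=\{(x_1,x_2):|x_1|\le1,\ x_2=H(x_1)\}$. For $F$ with $F(0)=0$ and $\sup|F'|\le1$, $\Phi_uF:[-1,1]\to\mathbb R$ denotes the (unique) function with $\varphi(\mathcal G_u(F))\cap\{|x_1|\le1\}=\mathcal G_u(\Phi_uF)$ (the graph transform). Seminorms: $\|F\|_{C^k}:=\max_{1\le j\le k}\sup_{[-1,1]}|\partial_{x_1}^jF|$, and $\|F\|_{C^{k,1}}:=\max\big(\|F\|_{C^k},\ \sup_{x_1\ne\tilde x_1}\frac{|\partial^k_{x_1}F(x_1)-\partial^k_{x_1}F(\tilde x_1)|}{|x_1-\tilde x_1|}\big)$. *)

theory Defs
  imports "HOL-Analysis.Analysis"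
begin

text \<open>Points of the plane are pairs (x1, x2). Unit coordinate direction:
  False = x1-direction, True = x2-direction.\<close>
definition coord_dir :: "bool \<Rightarrow> real \<times> real" where
  "coord_dir b = (if b then (0, 1) else (1, 0))"

definition partial :: "bool \<Rightarrow> (real \<times> real \<Rightarrow> real) \<Rightarrow> real \<times> real \<Rightarrow> real" where
  "partial b f p = deriv (\<lambda>t. f (p + t *\<^sub>R coord_dir b)) 0"

text \<open>Iterated partial derivative; a list ds of directions of length m
  represents a multi-index of order m (all orders of differentiation covered).\<close>
definition iter_partial :: "bool list \<Rightarrow> (real \<times> real \<Rightarrow> real) \<Rightarrow> real \<times> real \<Rightarrow> real" where
  "iter_partial ds f = foldr partial ds f"

definition Cm_on :: "nat \<Rightarrow> (real \<times> real \<Rightarrow> real) \<Rightarrow> (real \<times> real) set \<Rightarrow> bool" where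
  "Cm_on m f U \<longleftrightarrow>
     (\<forall>ds. length ds \<le> m \<longrightarrow> continuous_on U (iter_partial ds f)) \<and>
     (\<forall>ds b. length ds < m \<longrightarrow>
        (\<forall>p\<in>U. (\<lambda>t. iter_partial ds f (p + t *\<^sub>R coord_dir b)) differentiable (at 0)))"

definition diffeo_onto_image :: "nat \<Rightarrow> (real \<times> real \<Rightarrow> real \<times> real) \<Rightarrow>
    (real \<times> real) set \<Rightarrow> (real \<times> real) set \<Rightarrow> bool" where
  "diffeo_onto_image m \<phi> U V \<longleftrightarrow>
     inj_on \<phi> U \<and> \<phi> ` U \<subseteq> V \<and> open (\<phi> ` U) \<and>
     Cm_on m (fst \<circ> \<phi>) U \<and> Cm_on m (snd \<circ> \<phi>) U \<and>
     (\<exists>\<psi>. (\<forall>p\<in>U. \<psi> (\<phi> p) = p) \<and>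
          Cm_on m (fst \<circ> \<psi>) (\<phi> ` U) \<and> Cm_on m (snd \<circ> \<psi>) (\<phi> ` U))"

definition unit_box :: "(real \<times> real) set" where
  "unit_box = {p. \<bar>fst p\<bar> \<le> 1 \<and> \<bar>snd p\<bar> \<le> 1}"

definition graph_u :: "(real \<Rightarrow> real) \<Rightarrow> (real \<times> real) set" where
  "graph_u H = {(x1, H x1) | x1. \<bar>x1\<bar> \<le> 1}"

definition Ck_interval :: "nat \<Rightarrow> (real \<Rightarrow> real) \<Rightarrow> (nat \<Rightarrow> real \<Rightarrow> real) \<Rightarrow> bool" where
  "Ck_interval k F D \<longleftrightarrow> D 0 = F \<and>
     (\<forall>j<k. \<forall>x\<in>{-1..1}. (D j has_real_derivative D (Suc j) x) (at x within {-1..1})) \<and>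
     (\<forall>j\<le>k. continuous_on {-1..1} (D j))"

definition Ck_seminorm :: "nat \<Rightarrow> (nat \<Rightarrow> real \<Rightarrow> real) \<Rightarrow> real" where
  "Ck_seminorm k D = Sup ((\<lambda>(j, x). \<bar>D j x\<bar>) ` ({1..k} \<times> {-1..1}))"

definition Lip_seminorm :: "nat \<Rightarrow> (nat \<Rightarrow> real \<Rightarrow> real) \<Rightarrow> real" where
  "Lip_seminorm k D = Sup {\<bar>D k x - D k y\<bar> / \<bar>x - y\<bar> | x y.
      x \<in> {-1..1} \<and> y \<in> {-1..1} \<and> x \<noteq> y}"

definition Ck1_seminorm :: "nat \<Rightarrow> (nat \<Rightarrow> real \<Rightarrow> real) \<Rightarrow> real" where
  "Ck1_seminorm k D = max (Ck_seminorm k D) (Lip_seminorm k D)"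

end

theory Submission
  imports Defs "HOL-Analysis.Analysis"
begin

abbreviation II :: "real set" where "II \<equiv> {-1..1}"

definition Cb :: "bool \<Rightarrow> nat \<Rightarrow> real \<Rightarrow> (nat \<Rightarrow> real \<Rightarrow> real) \<Rightarrow> bool" where
 "Cb L m B D \<longleftrightarrow> (\<forall>j\<le>m. continuous_on II (D j) \<and> (\<forall>x\<in>II. \<bar>D j x\<bar> \<le> B)) \<and>
    (\<forall>j<m. \<forall>x\<in>II. (D j has_real_derivative D (Suc j) x) (at x within II)) \<and>
    (L \<longrightarrow> (\<forall>x\<in>II. \<forall>y\<in>II. \<bar>D m x - D m y\<bar> \<le> B * \<bar>x - y\<bar>))"

definition Cf :: "bool \<Rightarrow> nat \<Rightarrow> real \<Rightarrow> (real \<Rightarrow> real) \<Rightarrow> bool" where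
 "Cf L m B f \<longleftrightarrow> (\<exists>D. D 0 = f \<and> Cb L m B D)"

lemma Lip_of_deriv:
  assumes "\<And>x. x \<in> II \<Longrightarrow> (f has_real_derivative f' x) (at x within II)"
    and "\<And>x. x \<in> II \<Longrightarrow> \<bar>f' x\<bar> \<le> B" and "x \<in> II" "y \<in> II"
  shows "\<bar>f x - f y\<bar> \<le> B * \<bar>x - y\<bar>"
  using field_differentiable_bound[of II f f' B x y] assms by auto

lemma Cf_0_iff: "Cf L 0 B f \<longleftrightarrow> continuous_on II f \<and> (\<forall>x\<in>II. \<bar>f x\<bar> \<le> B) \<and>
   (L \<longrightarrow> (\<forall>x\<in>II. \<forall>y\<in>II. \<bar>f x - f y\<bar> \<le> B * \<bar>x - y\<bar>))"
  unfolding Cf_def Cb_def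
  apply safe
  apply auto[4]
  apply (rule exI[of _ "\<lambda>_. f"]) by auto

lemma deriv_cont: "(\<And>x. x \<in> II \<Longrightarrow> (f has_real_derivative f' x) (at x within II)) \<Longrightarrow> continuous_on II f"
  by (meson DERIV_continuous continuous_on_eq_continuous_within)

lemma Cf_Suc_iff: "Cf L (Suc m) B f \<longleftrightarrow> (\<forall>x\<in>II. \<bar>f x\<bar> \<le> B) \<and>
   (\<exists>f'. (\<forall>x\<in>II. (f has_real_derivative f' x) (at x within II)) \<and> Cf L m B f')"
proof
  assume "Cf L (Suc m) B f"
  then obtain D where D: "D 0 = f" "Cb L (Suc m) B D" unfolding Cf_def by auto
  have "Cb L m B (\<lambda>j. D (Suc j))" using D(2) unfolding Cb_def by auto
  then show "(\<forall>x\<in>II. \<bar>f x\<bar> \<le> B) \<and>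
   (\<exists>f'. (\<forall>x\<in>II. (f has_real_derivative f' x) (at x within II)) \<and> Cf L m B f')"
    using D unfolding Cf_def Cb_def by (auto intro!: exI[of _ "D 1"])
next
  assume A: "(\<forall>x\<in>II. \<bar>f x\<bar> \<le> B) \<and>
   (\<exists>f'. (\<forall>x\<in>II. (f has_real_derivative f' x) (at x within II)) \<and> Cf L m B f')"
  then obtain f' E where E: "\<forall>x\<in>II. (f has_real_derivative f' x) (at x within II)" "E 0 = f'" "Cb L m B E"
    unfolding Cf_def by auto
  define D where "D = (\<lambda>j. if j = 0 then f else E (j - 1))"
  have "Cb L (Suc m) B D"
    unfolding Cb_def
  proof (intro conjI allI impI ballI)
    fix j assume "j \<le> Suc m"
    then show "continuous_on II (D j)" using E deriv_cont[of f f'] unfolding D_def Cb_def by auto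
  next
    fix j x assume "j \<le> Suc m" "x \<in> II"
    then show "\<bar>D j x\<bar> \<le> B" using A E unfolding D_def Cb_def by auto
  next
    fix j x assume "j < Suc m" "x \<in> II"
    then show "(D j has_real_derivative D (Suc j) x) (at x within II)"
      using E unfolding D_def Cb_def by (cases j) auto
  next
    fix x y assume L and "x \<in> II" "y \<in> II"
    then show "\<bar>D (Suc m) x - D (Suc m) y\<bar> \<le> B * \<bar>x - y\<bar>" using E unfolding D_def Cb_def by auto
  qed
  then show "Cf L (Suc m) B f" unfolding Cf_def by (intro exI[of _ D]) (simp add: D_def)
qed

lemma Cf_SucI: "(\<And>x. x \<in> II \<Longrightarrow> \<bar>f x\<bar> \<le> B) \<Longrightarrow>
  (\<And>x. x \<in> II \<Longrightarrow> (f has_real_derivative f' x) (at x within II)) \<Longrightarrow> Cf L m B f' \<Longrightarrow> Cf L (Suc m) B f"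
  unfolding Cf_Suc_iff by (intro conjI exI[of _ f']) auto

lemma Cf_bound: "Cf L m B f \<Longrightarrow> x \<in> II \<Longrightarrow> \<bar>f x\<bar> \<le> B"
  by (cases m) (auto simp: Cf_0_iff Cf_Suc_iff)

lemma Cf_B_nonneg: "Cf L m B f \<Longrightarrow> 0 \<le> B"
  using Cf_bound[of L m B f 0] by auto

lemma Cf_cont: "Cf L m B f \<Longrightarrow> continuous_on II f"
  by (cases m) (auto simp: Cf_0_iff Cf_Suc_iff intro: deriv_cont)

lemma Cf_mono: "Cf L m B f \<Longrightarrow> B \<le> B' \<Longrightarrow> Cf L m B' f"
proof (induction m arbitrary: f)
  case 0
  then show ?case unfolding Cf_0_iff
    by (meson abs_ge_zero mult_right_mono order_trans)
next
  case (Suc m)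
  then show ?case unfolding Cf_Suc_iff by fastforce
qed

lemma Cf_cong: assumes A: "Cf L m B f" and E: "\<And>x. x \<in> II \<Longrightarrow> f x = g x" shows "Cf L m B g"
proof (cases m)
  case 0
  then have c: "continuous_on II f" "\<forall>x\<in>II. \<bar>f x\<bar> \<le> B"
     "L \<longrightarrow> (\<forall>x\<in>II. \<forall>y\<in>II. \<bar>f x - f y\<bar> \<le> B * \<bar>x - y\<bar>)" using A by (auto simp: Cf_0_iff)
  have "continuous_on II g" using c(1) continuous_on_cong[OF refl, of II f g] E by blast
  then show ?thesis using 0 c E by (auto simp: Cf_0_iff)
next
  case (Suc n)
  have "Cf L (Suc n) B f" using A Suc by simp
  then obtain f' where f': "\<forall>x\<in>II. (f has_real_derivative f' x) (at x within II)" "Cf L n B f'"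
    "\<forall>x\<in>II. \<bar>f x\<bar> \<le> B" unfolding Cf_Suc_iff by blast
  have g': "\<forall>x\<in>II. (g has_real_derivative f' x) (at x within II)"
  proof
    fix x assume x: "x \<in> II"
    show "(g has_real_derivative f' x) (at x within II)"
      apply (rule has_field_derivative_transform_within[of f "f' x" x II 1])
      using f' E x by auto
  qed
  have "Cf L (Suc n) B g" apply (rule Cf_SucI[of g B f']) using E f' g' by auto
  then show ?thesis using Suc by simp
qed

lemma Cf_down: "Cf L (Suc m) B f \<Longrightarrow> Cf L m B f"
proof (induction m arbitrary: f)
  case 0
  then obtain f' where "\<forall>x\<in>II. (f has_real_derivative f' x) (at x within II)" "Cf L 0 B f'"
    "\<forall>x\<in>II. \<bar>f x\<bar> \<le> B" using Cf_Suc_iff by auto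
  then show ?case unfolding Cf_0_iff
    using Lip_of_deriv[of f f' B] deriv_cont[of f f'] by (auto simp: Cf_0_iff)
next
  case (Suc m)
  then show ?case unfolding Cf_Suc_iff[of L "Suc m"] by (auto simp: Cf_Suc_iff[of L m])
qed

lemma Cf_down_le: "Cf L m B f \<Longrightarrow> n \<le> m \<Longrightarrow> Cf L n B f"
proof (induction m)
  case 0 then show ?case by auto
next
  case (Suc m) then show ?case using Cf_down by (metis le_Suc_eq)
qed

lemma Cf_Lip: "Cf True m B f \<Longrightarrow> x \<in> II \<Longrightarrow> y \<in> II \<Longrightarrow> \<bar>f x - f y\<bar> \<le> B * \<bar>x - y\<bar>"
  using Cf_down_le[of True m B f 0] by (auto simp: Cf_0_iff)

lemma Cf_False: "Cf L m B f \<Longrightarrow> Cf False m B f"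
  unfolding Cf_def Cb_def by auto

lemma Cf_const: "\<bar>c\<bar> \<le> B \<Longrightarrow> Cf L m B (\<lambda>_. c)"
proof (induction m)
  case 0 then show ?case by (auto simp: Cf_0_iff mult_nonneg_nonneg)
next
  case (Suc m)
  have B0: "0 \<le> B" using Suc.prems by linarith
  have "Cf L m B (\<lambda>_. 0)"
  proof (induction m)
    case 0 then show ?case using B0 by (auto simp: Cf_0_iff)
  next
    case (Suc m) then show ?case using B0 by (auto simp: Cf_Suc_iff intro!: exI[of _ "\<lambda>_. 0"])
  qed
  then show ?case using Suc.prems by (auto simp: Cf_Suc_iff intro!: exI[of _ "\<lambda>_. 0"])
qed

lemma Cf_add: "Cf L m B1 f \<Longrightarrow> Cf L m B2 g \<Longrightarrow> Cf L m (B1 + B2) (\<lambda>x. f x + g x)"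
proof (induction m arbitrary: f g)
  case 0
  have a: "\<forall>x\<in>II. \<forall>y\<in>II. L \<longrightarrow> \<bar>f x + g x - (f y + g y)\<bar> \<le> (B1 + B2) * \<bar>x - y\<bar>"
  proof (intro ballI impI)
    fix x y assume xy: "x \<in> II" "y \<in> II" L
    have "\<bar>f x + g x - (f y + g y)\<bar> \<le> \<bar>f x - f y\<bar> + \<bar>g x - g y\<bar>" by linarith
    also have "\<dots> \<le> B1 * \<bar>x - y\<bar> + B2 * \<bar>x - y\<bar>" using 0 xy by (intro add_mono) (auto simp: Cf_0_iff)
    finally show "\<bar>f x + g x - (f y + g y)\<bar> \<le> (B1 + B2) * \<bar>x - y\<bar>" by (simp add: distrib_right)
  qed
  have b: "\<forall>x\<in>II. \<bar>f x + g x\<bar> \<le> B1 + B2"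
  proof
    fix x assume "x \<in> II"
    then have "\<bar>f x\<bar> \<le> B1" "\<bar>g x\<bar> \<le> B2" using 0 by (auto simp: Cf_0_iff)
    then show "\<bar>f x + g x\<bar> \<le> B1 + B2" using abs_triangle_ineq[of "f x" "g x"] by linarith
  qed
  show ?case using 0 a b by (auto simp: Cf_0_iff intro!: continuous_intros)
next
  case (Suc m)
  from Suc.prems obtain f' where f': "\<forall>x\<in>II. (f has_real_derivative f' x) (at x within II)" "Cf L m B1 f'"
    "\<forall>x\<in>II. \<bar>f x\<bar> \<le> B1" using Cf_Suc_iff by auto
  from Suc.prems obtain g' where g': "\<forall>x\<in>II. (g has_real_derivative g' x) (at x within II)" "Cf L m B2 g'"
    "\<forall>x\<in>II. \<bar>g x\<bar> \<le> B2" using Cf_Suc_iff by auto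
  have b: "\<bar>f x + g x\<bar> \<le> B1 + B2" if "x \<in> II" for x
    using f'(3) g'(3) that abs_triangle_ineq[of "f x" "g x"] by fastforce
  have d: "((\<lambda>x. f x + g x) has_real_derivative f' x + g' x) (at x within II)" if "x \<in> II" for x
    using f'(1) g'(1) that by (intro DERIV_add) auto
  show ?case apply (rule Cf_SucI[of "\<lambda>x. f x + g x" _ "\<lambda>x. f' x + g' x"]) using b d Suc.IH[OF f'(2) g'(2)] by auto
qed

lemma Cf_scale: "Cf L m B f \<Longrightarrow> Cf L m (\<bar>c\<bar> * B) (\<lambda>x. c * f x)"
proof (induction m arbitrary: f)
  case 0
  then have c: "continuous_on II f" "\<forall>x\<in>II. \<bar>f x\<bar> \<le> B"
     "L \<longrightarrow> (\<forall>x\<in>II. \<forall>y\<in>II. \<bar>f x - f y\<bar> \<le> B * \<bar>x - y\<bar>)" by (auto simp: Cf_0_iff)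
  have 1: "continuous_on II (\<lambda>x. c * f x)" using c(1) by (intro continuous_on_mult_left)
  have 2: "\<forall>x\<in>II. \<bar>c * f x\<bar> \<le> \<bar>c\<bar> * B" using c(2) by (simp add: abs_mult mult_left_mono)
  have 3: "L \<longrightarrow> (\<forall>x\<in>II. \<forall>y\<in>II. \<bar>c * f x - c * f y\<bar> \<le> \<bar>c\<bar> * B * \<bar>x - y\<bar>)"
  proof (intro impI ballI)
    fix x y assume "L" "x \<in> II" "y \<in> II"
    then have "\<bar>f x - f y\<bar> \<le> B * \<bar>x - y\<bar>" using c(3) by blast
    then have "\<bar>c\<bar> * \<bar>f x - f y\<bar> \<le> \<bar>c\<bar> * (B * \<bar>x - y\<bar>)" by (simp add: mult_left_mono)
    then show "\<bar>c * f x - c * f y\<bar> \<le> \<bar>c\<bar> * B * \<bar>x - y\<bar>"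
      by (simp add: abs_mult right_diff_distrib[symmetric] mult.assoc)
  qed
  show ?case unfolding Cf_0_iff using 1 2 3 by blast
next
  case (Suc m)
  from Suc.prems obtain f' where f': "\<forall>x\<in>II. (f has_real_derivative f' x) (at x within II)" "Cf L m B f'"
    "\<forall>x\<in>II. \<bar>f x\<bar> \<le> B" using Cf_Suc_iff by auto
  have d: "\<forall>x\<in>II. ((\<lambda>x. c * f x) has_real_derivative c * f' x) (at x within II)"
    using f'(1) by (auto intro: DERIV_cmult)
  have b: "\<forall>x\<in>II. \<bar>c * f x\<bar> \<le> \<bar>c\<bar> * B" using f'(3) by (simp add: abs_mult mult_left_mono)
  have i: "Cf L m (\<bar>c\<bar> * B) (\<lambda>x. c * f' x)" using Suc.IH[OF f'(2)] .
  show ?case apply (rule Cf_SucI[of "\<lambda>x. c * f x" _ "\<lambda>x. c * f' x"]) using d b i by auto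
qed

lemma Cf_mult: "Cf L m B1 f \<Longrightarrow> Cf L m B2 g \<Longrightarrow> Cf L m (2 ^ (m + 1) * B1 * B2) (\<lambda>x. f x * g x)"
proof (induction m arbitrary: f g B1 B2)
  case 0
  have b1: "0 \<le> B1" "0 \<le> B2" using 0 Cf_B_nonneg by auto
  have "\<bar>f x * g x - f y * g y\<bar> \<le> 2 * B1 * B2 * \<bar>x - y\<bar>" if "L" "x \<in> II" "y \<in> II" for x y
  proof -
    have e: "f x * g x - f y * g y = f x * (g x - g y) + g y * (f x - f y)" by algebra
    have "\<bar>f x * (g x - g y)\<bar> \<le> B1 * (B2 * \<bar>x - y\<bar>)"
      unfolding abs_mult apply (rule mult_mono) using 0 that b1 by (auto simp: Cf_0_iff)
    moreover have "\<bar>g y * (f x - f y)\<bar> \<le> B2 * (B1 * \<bar>x - y\<bar>)"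
      unfolding abs_mult apply (rule mult_mono) using 0 that b1 by (auto simp: Cf_0_iff)
    ultimately show ?thesis unfolding e by (simp add: algebra_simps)
  qed
  moreover have "\<bar>f x * g x\<bar> \<le> 2 * B1 * B2" if "x \<in> II" for x
  proof -
    have "\<bar>f x * g x\<bar> \<le> B1 * B2" unfolding abs_mult apply (rule mult_mono) using 0 that b1 by (auto simp: Cf_0_iff)
    moreover have "0 \<le> B1 * B2" using b1 by simp
    ultimately show ?thesis by linarith
  qed
  ultimately show ?case using 0 by (auto simp: Cf_0_iff intro!: continuous_intros)
next
  case (Suc m)
  have b1: "0 \<le> B1" "0 \<le> B2" using Suc Cf_B_nonneg by auto
  from Suc.prems obtain f' where f': "\<forall>x\<in>II. (f has_real_derivative f' x) (at x within II)" "Cf L m B1 f'"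
    "\<forall>x\<in>II. \<bar>f x\<bar> \<le> B1" using Cf_Suc_iff by auto
  from Suc.prems obtain g' where g': "\<forall>x\<in>II. (g has_real_derivative g' x) (at x within II)" "Cf L m B2 g'"
    "\<forall>x\<in>II. \<bar>g x\<bar> \<le> B2" using Cf_Suc_iff by auto
  have f0: "Cf L m B1 f" "Cf L m B2 g" using Suc.prems Cf_down by auto
  have eq: "2 ^ (m + 1) * B1 * B2 + 2 ^ (m + 1) * B1 * B2 = 2 ^ (Suc m + 1) * B1 * B2" by simp
  have d: "Cf L m (2 ^ (Suc m + 1) * B1 * B2) (\<lambda>x. f' x * g x + f x * g' x)"
    using Cf_add[OF Suc.IH[OF f'(2) f0(2)] Suc.IH[OF f0(1) g'(2)]] unfolding eq .
  have "\<bar>f x * g x\<bar> \<le> 2 ^ (Suc m + 1) * B1 * B2" if "x \<in> II" for x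
  proof -
    have "\<bar>f x * g x\<bar> \<le> B1 * B2" unfolding abs_mult apply (rule mult_mono) using f' g' that b1 by auto
    moreover have "(1::real) \<le> 2 ^ (Suc m + 1)" by (rule one_le_power) simp
    then have "B1 * B2 \<le> 2 ^ (Suc m + 1) * (B1 * B2)" using mult_right_mono[of 1 "2 ^ (Suc m + 1)" "B1 * B2"] b1 by simp
    ultimately show ?thesis by simp
  qed
  moreover have "\<forall>x\<in>II. ((\<lambda>x. f x * g x) has_real_derivative f' x * g x + f x * g' x) (at x within II)"
  proof
    fix x assume "x \<in> II"
    then have "((\<lambda>x. f x * g x) has_real_derivative f x * g' x + f' x * g x) (at x within II)"
      using f'(1) g'(1) by (intro DERIV_mult') auto
    then show "((\<lambda>x. f x * g x) has_real_derivative f' x * g x + f x * g' x) (at x within II)"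
      by (simp add: add.commute)
  qed
  ultimately have "(\<forall>x\<in>II. \<bar>f x * g x\<bar> \<le> 2 ^ (Suc m + 1) * B1 * B2)"
     "\<forall>x\<in>II. ((\<lambda>x. f x * g x) has_real_derivative f' x * g x + f x * g' x) (at x within II)" by auto
  then have bd: "\<forall>x\<in>II. \<bar>f x * g x\<bar> \<le> 2 ^ (Suc m + 1) * B1 * B2"
     "\<forall>x\<in>II. ((\<lambda>x. f x * g x) has_real_derivative f' x * g x + f x * g' x) (at x within II)" by auto
  show ?case apply (rule Cf_SucI[of "\<lambda>x. f x * g x" _ "\<lambda>x. f' x * g x + f x * g' x"]) using bd d by auto
qed

definition Dv :: "(real \<Rightarrow> real) \<Rightarrow> real \<Rightarrow> real" where
  "Dv f x = vector_derivative f (at x within II)"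

lemma Dv_eq: "x \<in> II \<Longrightarrow> (f has_real_derivative d) (at x within II) \<Longrightarrow> Dv f x = d"
  unfolding Dv_def has_real_derivative_iff_has_vector_derivative
  by (rule vector_derivative_within_closed_interval) auto

lemma Dv_cong: assumes "x \<in> II" "\<And>y. y \<in> II \<Longrightarrow> f y = g y" shows "Dv f x = Dv g x"
proof -
  have "\<And>d. (f has_vector_derivative d) (at x within II) \<longleftrightarrow> (g has_vector_derivative d) (at x within II)"
    using has_vector_derivative_transform_within[of _ _ x II 1] assms by (metis zero_less_one)
  then show ?thesis unfolding Dv_def vector_derivative_def by simp
qed

lemma Cf_Dv: assumes "Cf L (Suc m) B f"
  shows "Cf L m B (Dv f)" "\<And>x. x \<in> II \<Longrightarrow> (f has_real_derivative Dv f x) (at x within II)"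
proof -
  obtain f' where f': "\<forall>x\<in>II. (f has_real_derivative f' x) (at x within II)" "Cf L m B f'"
    using assms Cf_Suc_iff by auto
  have e: "\<And>x. x \<in> II \<Longrightarrow> Dv f x = f' x" using f' Dv_eq by auto
  show "Cf L m B (Dv f)" using Cf_cong[OF f'(2)] e by metis
  show "\<And>x. x \<in> II \<Longrightarrow> (f has_real_derivative Dv f x) (at x within II)" using e f' by auto
qed

lemma Dvpow_Cf: "Cf L m B f \<Longrightarrow> j \<le> m \<Longrightarrow> Cf L (m - j) B ((Dv ^^ j) f)"
proof (induction j arbitrary: m f)
  case 0 then show ?case by simp
next
  case (Suc j)
  then obtain m' where m: "m = Suc m'" by (cases m) auto
  have "Cf L m' B (Dv f)" using Suc.prems m Cf_Dv by auto
  then have "Cf L (m' - j) B ((Dv ^^ j) (Dv f))" using Suc m by auto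
  then show ?case using m by (simp del: funpow.simps add: funpow_Suc_right)
qed

lemma Dvpow_cong: "(\<And>y. y \<in> II \<Longrightarrow> f y = g y) \<Longrightarrow> x \<in> II \<Longrightarrow> (Dv ^^ j) f x = (Dv ^^ j) g x"
proof (induction j arbitrary: f g)
  case 0 then have "f x = g x" by blast then show ?case by (simp only: funpow_0)
next
  case (Suc j)
  have e: "Dv f y = Dv g y" if "y \<in> II" for y
    apply (rule Dv_cong[OF that]) by (rule Suc.prems(1))
  have "(Dv ^^ j) (Dv f) x = (Dv ^^ j) (Dv g) x" by (rule Suc.IH[OF e Suc.prems(2)])
  then show ?case by (simp del: funpow.simps add: funpow_Suc_right)
qed

lemma Dvpow_lin: "Cf L m B1 f \<Longrightarrow> Cf L m B2 g \<Longrightarrow> j \<le> m \<Longrightarrow> x \<in> II \<Longrightarrow>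
   (Dv ^^ j) (\<lambda>x. a * f x + g x) x = a * (Dv ^^ j) f x + (Dv ^^ j) g x"
proof (induction j arbitrary: m f g x)
  case 0 then show ?case by simp
next
  case (Suc j)
  then obtain m' where m: "m = Suc m'" by (cases m) auto
  have d: "Dv (\<lambda>x. a * f x + g x) y = a * Dv f y + Dv g y" if "y \<in> II" for y
    using that Cf_Dv(2)[of L m' B1 f] Cf_Dv(2)[of L m' B2 g] Suc.prems m
    by (intro Dv_eq) (auto intro!: derivative_eq_intros)
  have "(Dv ^^ j) (Dv (\<lambda>x. a * f x + g x)) x = (Dv ^^ j) (\<lambda>y. a * Dv f y + Dv g y) x"
    using d Suc.prems by (intro Dvpow_cong) auto
  also have "\<dots> = a * (Dv ^^ j) (Dv f) x + (Dv ^^ j) (Dv g) x"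
    using Suc.IH[of m' "Dv f" "Dv g" x] Suc.prems m Cf_Dv(1) by auto
  finally show ?case by (simp del: funpow.simps add: funpow_Suc_right)
qed

definition Top :: "(real \<Rightarrow> real) \<Rightarrow> (real \<Rightarrow> real) \<Rightarrow> real \<Rightarrow> real" where
  "Top w f x = Dv f x * w x"

lemma Toppow_cong: "(\<And>y. y \<in> II \<Longrightarrow> f y = g y) \<Longrightarrow> x \<in> II \<Longrightarrow> (Top w ^^ j) f x = (Top w ^^ j) g x"
proof (induction j arbitrary: f g)
  case 0 then have "f x = g x" by blast then show ?case by (simp only: funpow_0)
next
  case (Suc j)
  have e: "Top w f y = Top w g y" if "y \<in> II" for y
    unfolding Top_def using Dv_cong[OF that, of f g] Suc.prems(1) by simp
  have "(Top w ^^ j) (Top w f) x = (Top w ^^ j) (Top w g) x" by (rule Suc.IH[OF e Suc.prems(2)])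
  then show ?case by (simp del: funpow.simps add: funpow_Suc_right)
qed

lemma Toppow_Cf: "Cf L m B f \<Longrightarrow> Cf L m Bw w \<Longrightarrow> j \<le> m \<Longrightarrow> \<exists>B'. Cf L (m - j) B' ((Top w ^^ j) f)"
proof (induction j arbitrary: m f B)
  case 0 then show ?case by auto
next
  case (Suc j)
  then obtain m' where m: "m = Suc m'" by (cases m) auto
  have "Cf L m' (2 ^ (m' + 1) * B * Bw) (Top w f)"
    unfolding Top_def using Cf_mult[OF Cf_Dv(1) Cf_down] Suc.prems m by auto
  moreover have "Cf L m' Bw w" using Suc.prems m Cf_down by auto
  ultimately obtain B' where "Cf L (m' - j) B' ((Top w ^^ j) (Top w f))"
    using Suc.IH[of m'] Suc.prems m by fastforce
  then show ?case using m by (auto simp del: funpow.simps simp add: funpow_Suc_right)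
qed

lemma lead: "j \<le> m \<Longrightarrow> \<exists>K>0. \<forall>f B r \<rho> w. Cf L m B f \<and> Cf L m \<rho> r \<and> \<rho> \<le> 1 \<and>
    (\<forall>x\<in>II. w x = 1/2 + r x) \<longrightarrow>
    (\<exists>R. Cf L (m - j) (K * B * \<rho>) R \<and> (\<forall>x\<in>II. (Top w ^^ j) f x = (Dv ^^ j) f x / 2 ^ j + R x))"
proof (induction j)
  case 0
  show ?case
  proof (intro exI[of _ 1] conjI allI impI)
    fix f B r \<rho> w assume a: "Cf L m B f \<and> Cf L m \<rho> r \<and> \<rho> \<le> 1 \<and> (\<forall>x\<in>II. w x = 1/2 + r x)"
    then have "0 \<le> B * \<rho>" using Cf_B_nonneg by auto
    then show "\<exists>R. Cf L (m - 0) (1 * B * \<rho>) R \<and> (\<forall>x\<in>II. (Top w ^^ 0) f x = (Dv ^^ 0) f x / 2 ^ 0 + R x)"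
      by (intro exI[of _ "\<lambda>_. 0"]) (auto intro: Cf_const)
  qed simp
next
  case (Suc j)
  then obtain K where K: "K > 0" "\<forall>f B r \<rho> w. Cf L m B f \<and> Cf L m \<rho> r \<and> \<rho> \<le> 1 \<and>
    (\<forall>x\<in>II. w x = 1/2 + r x) \<longrightarrow>
    (\<exists>R. Cf L (m - j) (K * B * \<rho>) R \<and> (\<forall>x\<in>II. (Top w ^^ j) f x = (Dv ^^ j) f x / 2 ^ j + R x))" by auto
  define n where "n = m - Suc j"
  have mj: "m - j = Suc n" using Suc.prems n_def by auto
  show ?case
  proof (intro exI[of _ "2 ^ (m + 1) * (1 + 2 * K)"] conjI allI impI)
    show "0 < (2::real) ^ (m + 1) * (1 + 2 * K)" using K by simp
    fix f B r \<rho> w assume a: "Cf L m B f \<and> Cf L m \<rho> r \<and> \<rho> \<le> 1 \<and> (\<forall>x\<in>II. w x = 1/2 + r x)"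
    then obtain R where R: "Cf L (Suc n) (K * B * \<rho>) R" "\<forall>x\<in>II. (Top w ^^ j) f x = (Dv ^^ j) f x / 2 ^ j + R x"
      using K(2) mj by metis
    have B0: "0 \<le> B" "0 \<le> \<rho>" using a Cf_B_nonneg by auto
    define P where "P = (Dv ^^ j) f"
    have P: "Cf L (Suc n) B P" unfolding P_def using Dvpow_Cf[of L m B f j] a Suc.prems mj by auto
    have r: "Cf L n \<rho> r" using a Cf_down_le[of L m \<rho> r n] n_def by auto
    have w': "Cf L n (1/2 + \<rho>) (\<lambda>x. 1/2 + r x)" using Cf_add[OF Cf_const[of "1/2" "1/2"] r] by simp
    have w'': "Cf L n 2 (\<lambda>x. 1/2 + r x)" using Cf_mono[OF w'] a by auto
    define R' where "R' = (\<lambda>x. (1 / 2 ^ j) * (Dv P x * r x) + Dv R x * (1/2 + r x))"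
    have c1: "Cf L n (2 ^ (n + 1) * B * \<rho>) (\<lambda>x. Dv P x * r x)"
      using Cf_mult[OF Cf_Dv(1)[OF P] r] .
    have c1': "Cf L n (2 ^ (n + 1) * B * \<rho>) (\<lambda>x. (1 / 2 ^ j) * (Dv P x * r x))"
    proof (rule Cf_mono[OF Cf_scale[OF c1, of "1 / 2 ^ j"]])
      have "\<bar>1 / 2 ^ j\<bar> \<le> (1::real)" by simp
      moreover have "0 \<le> 2 ^ (n + 1) * B * \<rho>" using B0 by simp
      ultimately show "\<bar>1 / 2 ^ j\<bar> * (2 ^ (n + 1) * B * \<rho>) \<le> 2 ^ (n + 1) * B * \<rho>"
        using mult_right_mono[of "\<bar>1 / 2 ^ j\<bar>" 1 "2 ^ (n + 1) * B * \<rho>"] by simp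
    qed
    have c2: "Cf L n (2 ^ (n + 1) * (K * B * \<rho>) * 2) (\<lambda>x. Dv R x * (1/2 + r x))"
      using Cf_mult[OF Cf_Dv(1)[OF R(1)] w''] .
    have "Cf L n (2 ^ (n + 1) * B * \<rho> + 2 ^ (n + 1) * (K * B * \<rho>) * 2) R'"
      unfolding R'_def using Cf_add[OF c1' c2] .
    moreover have "2 ^ (n + 1) * B * \<rho> + 2 ^ (n + 1) * (K * B * \<rho>) * 2 \<le> 2 ^ (m + 1) * (1 + 2 * K) * B * \<rho>"
    proof -
      have "2 ^ (n + 1) * B * \<rho> + 2 ^ (n + 1) * (K * B * \<rho>) * 2 = (2::real) ^ (n + 1) * (1 + 2 * K) * (B * \<rho>)"
        by (simp add: algebra_simps)
      also have "\<dots> \<le> 2 ^ (m + 1) * (1 + 2 * K) * (B * \<rho>)"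
        using B0 K n_def by (intro mult_right_mono) (auto intro!: power_increasing)
      finally show ?thesis by (simp add: mult.assoc)
    qed
    ultimately have R'C: "Cf L (m - Suc j) (2 ^ (m + 1) * (1 + 2 * K) * B * \<rho>) R'"
      using Cf_mono n_def by blast
    have "(Top w ^^ Suc j) f x = (Dv ^^ Suc j) f x / 2 ^ Suc j + R' x" if x: "x \<in> II" for x
    proof -
      have "(Top w ^^ Suc j) f x = Dv ((Top w ^^ j) f) x * w x" by (simp add: Top_def)
      also have "Dv ((Top w ^^ j) f) x = Dv (\<lambda>y. (1 / 2 ^ j) * P y + R y) x"
        using R(2) x by (intro Dv_cong) (auto simp: P_def)
      also have "\<dots> = (1 / 2 ^ j) * Dv P x + Dv R x"
        using x Cf_Dv(2)[OF P] Cf_Dv(2)[OF R(1)] by (intro Dv_eq) (auto intro!: derivative_eq_intros)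
      finally have e: "(Top w ^^ Suc j) f x = (1 / 2 ^ j * Dv P x + Dv R x) * w x" .
      have dd: "(Dv ^^ Suc j) f x = Dv P x" by (simp add: P_def)
      have wx: "w x = 1/2 + r x" using a x by blast
      show ?thesis unfolding e wx dd R'_def by (simp add: field_simps)
    qed
    then show "\<exists>R. Cf L (m - Suc j) (2 ^ (m + 1) * (1 + 2 * K) * B * \<rho>) R \<and>
        (\<forall>x\<in>II. (Top w ^^ Suc j) f x = (Dv ^^ Suc j) f x / 2 ^ Suc j + R x)"
      using R'C by blast
  qed
qed

lemma Cf_inv: "0 < c \<Longrightarrow> \<exists>K. \<forall>f. Cf L m B f \<and> (\<forall>x\<in>II. c \<le> f x) \<longrightarrow> Cf L m K (\<lambda>x. 1 / f x)"
proof (induction m)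
  case 0
  show ?case
  proof (intro exI[of _ "max (1/c) (B / c^2)"] allI impI)
    fix f assume a: "Cf L 0 B f \<and> (\<forall>x\<in>II. c \<le> f x)"
    have pos: "\<And>x. x \<in> II \<Longrightarrow> 0 < f x" using a 0 by force
    have fc: "continuous_on II f" using a by (simp add: Cf_0_iff)
    have nz: "\<forall>x\<in>II. f x \<noteq> 0" using pos by (metis less_irrefl)
    have cont: "continuous_on II (\<lambda>x. 1 / f x)"
      by (rule continuous_on_divide[OF continuous_on_const fc]) (use nz in auto)
    have bd: "\<bar>1 / f x\<bar> \<le> max (1/c) (B / c^2)" if "x \<in> II" for x
    proof -
      have "\<bar>1 / f x\<bar> = 1 / f x" using pos[OF that] by simp
      also have "\<dots> \<le> 1 / c" using a that 0 pos[OF that] by (intro divide_left_mono) auto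
      finally show ?thesis by simp
    qed
    have lip: "\<bar>1 / f x - 1 / f y\<bar> \<le> max (1/c) (B / c^2) * \<bar>x - y\<bar>" if L "x \<in> II" "y \<in> II" for x y
    proof -
      have px: "0 < f x" "0 < f y" using pos that by auto
      then have "1 / f x - 1 / f y = (f y - f x) / (f x * f y)" by (simp add: field_simps)
      then have "\<bar>1 / f x - 1 / f y\<bar> = \<bar>f y - f x\<bar> / \<bar>f x * f y\<bar>" by (simp add: abs_div)
      also have "\<bar>f x * f y\<bar> = f x * f y" using px by simp
      finally have "\<bar>1 / f x - 1 / f y\<bar> = \<bar>f y - f x\<bar> / (f x * f y)" .
      also have "\<dots> \<le> (B * \<bar>x - y\<bar>) / (c * c)"
      proof (rule frac_le)
        show "\<bar>f y - f x\<bar> \<le> B * \<bar>x - y\<bar>" using a that by (auto simp: Cf_0_iff abs_minus_commute)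
        show "0 \<le> B * \<bar>x - y\<bar>" using a Cf_B_nonneg by auto
        show "0 < c * c" using 0 by simp
        show "c * c \<le> f x * f y" using a that 0 px by (intro mult_mono) auto
      qed
      also have "\<dots> = B / c^2 * \<bar>x - y\<bar>" by (simp add: power2_eq_square)
      also have "\<dots> \<le> max (1/c) (B / c^2) * \<bar>x - y\<bar>" by (intro mult_right_mono) auto
      finally show ?thesis .
    qed
    show "Cf L 0 (max (1/c) (B / c^2)) (\<lambda>x. 1 / f x)" using cont bd lip by (auto simp: Cf_0_iff)
  qed
next
  case (Suc m)
  then obtain K where K: "\<forall>f. Cf L m B f \<and> (\<forall>x\<in>II. c \<le> f x) \<longrightarrow> Cf L m K (\<lambda>x. 1 / f x)" by auto
  show ?case
  proof (intro exI[of _ "max (1/c) (\<bar>-1\<bar> * (2 ^ (m + 1) * (2 ^ (m + 1) * B * K) * K))"] allI impI)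
    fix f assume a: "Cf L (Suc m) B f \<and> (\<forall>x\<in>II. c \<le> f x)"
    have pos: "\<And>x. x \<in> II \<Longrightarrow> 0 < f x" using a Suc.prems by force
    obtain f' where f': "\<forall>x\<in>II. (f has_real_derivative f' x) (at x within II)" "Cf L m B f'"
      using a Cf_Suc_iff by auto
    have i: "Cf L m K (\<lambda>x. 1 / f x)" using K a Cf_down by blast
    have p: "Cf L m (\<bar>-1\<bar> * (2 ^ (m + 1) * (2 ^ (m + 1) * B * K) * K)) (\<lambda>x. -1 * ((f' x * (1 / f x)) * (1 / f x)))"
      using Cf_scale[OF Cf_mult[OF Cf_mult[OF f'(2) i] i]] .
    have d: "((\<lambda>x. 1 / f x) has_real_derivative -1 * ((f' x * (1 / f x)) * (1 / f x))) (at x within II)"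
      if "x \<in> II" for x
    proof -
      have "((\<lambda>x. inverse (f x)) has_real_derivative (- (f' x * inverse (f x ^ Suc (Suc 0))))) (at x within II)"
        using DERIV_inverse_fun[of f "f' x" x II] f' pos that by force
      then show ?thesis by (simp add: inverse_eq_divide power2_eq_square)
    qed
    have bd: "\<bar>1 / f x\<bar> \<le> 1 / c" if "x \<in> II" for x
    proof -
      have "\<bar>1 / f x\<bar> = 1 / f x" using pos[OF that] by simp
      also have "\<dots> \<le> 1 / c" using a that Suc.prems pos[OF that] by (intro divide_left_mono) auto
      finally show ?thesis by simp
    qed
    show "Cf L (Suc m) (max (1/c) (\<bar>-1\<bar> * (2 ^ (m + 1) * (2 ^ (m + 1) * B * K) * K))) (\<lambda>x. 1 / f x)"
      unfolding Cf_Suc_iff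
      using d bd Cf_mono[OF p, of "max (1/c) (\<bar>-1\<bar> * (2 ^ (m + 1) * (2 ^ (m + 1) * B * K) * K))"]
      by (intro conjI exI[of _ "\<lambda>x. -1 * ((f' x * (1 / f x)) * (1 / f x))"]) force+
  qed
qed

lemma iter_partial_snoc: "iter_partial ds (partial b f) = iter_partial (ds @ [b]) f"
  by (simp add: iter_partial_def)

lemma iter_partial_Nil[simp]: "iter_partial [] f = f"
  by (simp add: iter_partial_def)

lemma iter_partial_single[simp]: "iter_partial [b] f = partial b f"
  by (simp add: iter_partial_def)

lemma Cm_on_partial: "Cm_on (Suc n) P U \<Longrightarrow> Cm_on n (partial b P) U"
  unfolding Cm_on_def iter_partial_snoc by auto

lemma Cm_on_mono: "Cm_on m P U \<Longrightarrow> k \<le> m \<Longrightarrow> Cm_on k P U"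
  unfolding Cm_on_def by auto

lemma Cm_cont: "Cm_on n P U \<Longrightarrow> continuous_on U P"
  unfolding Cm_on_def by (metis iter_partial_Nil le0 list.size(3))

lemma Cm_partial_cont: "Cm_on (Suc n) P U \<Longrightarrow> continuous_on U (partial b P)"
  using Cm_cont Cm_on_partial by blast

lemma dir_deriv: assumes "Cm_on (Suc n) P U" "p \<in> U"
  shows "((\<lambda>t. P (p + t *\<^sub>R coord_dir b)) has_real_derivative partial b P p) (at 0)"
proof -
  have "(\<lambda>t. iter_partial [] P (p + t *\<^sub>R coord_dir b)) differentiable (at 0)"
    using assms unfolding Cm_on_def by (metis length_0_conv zero_less_Suc)
  then show ?thesis unfolding partial_def
    using DERIV_deriv_iff_real_differentiable by auto
qed

lemma line_x: assumes "Cm_on (Suc n) P U" "(a, b) \<in> U"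
  shows "((\<lambda>x. P (x, b)) has_real_derivative partial False P (a, b)) (at a)"
proof -
  have "((\<lambda>t. P ((a, b) + t *\<^sub>R coord_dir False)) has_real_derivative partial False P (a, b)) (at 0)"
    using dir_deriv[OF assms] .
  moreover have "(\<lambda>t. P ((a, b) + t *\<^sub>R coord_dir False)) = (\<lambda>t. (\<lambda>x. P (x, b)) (t + a))"
    by (auto simp: coord_dir_def add.commute)
  ultimately show ?thesis using DERIV_shift[of "\<lambda>x. P (x, b)" _ 0 a] by simp
qed

lemma line_y: assumes "Cm_on (Suc n) P U" "(a, b) \<in> U"
  shows "((\<lambda>y. P (a, y)) has_real_derivative partial True P (a, b)) (at b)"
proof -
  have "((\<lambda>t. P ((a, b) + t *\<^sub>R coord_dir True)) has_real_derivative partial True P (a, b)) (at 0)"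
    using dir_deriv[OF assms] .
  moreover have "(\<lambda>t. P ((a, b) + t *\<^sub>R coord_dir True)) = (\<lambda>t. (\<lambda>y. P (a, y)) (t + b))"
    by (auto simp: coord_dir_def add.commute)
  ultimately show ?thesis using DERIV_shift[of "\<lambda>y. P (a, y)" _ 0 b] by simp
qed

lemma frechet: assumes C: "Cm_on (Suc n) P U" and U: "open U" and p: "p \<in> U"
  shows "(P has_derivative (\<lambda>v. partial False P p * fst v + partial True P p * snd v)) (at p)"
proof -
  obtain a b where ab: "p = (a, b)" by (cases p)
  obtain A B where AB: "open A" "open B" "(a, b) \<in> A \<times> B" "A \<times> B \<subseteq> U"
    using open_prod_elim[OF U, of "(a, b)"] p ab by metis
  obtain e where e: "e > 0" "ball b e \<subseteq> B" using AB(2,3) openE by blast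
  define X where "X = A"
  define Y where "Y = ball b e"
  have XY: "X \<times> Y \<subseteq> U" using AB e unfolding X_def Y_def by auto
  have fx: "((\<lambda>x. P (x, b)) has_derivative (\<lambda>tx. partial False P (a, b) * tx)) (at a within X)"
    by (rule has_derivative_at_withinI) (use line_x[OF C, of a b] p ab in \<open>simp add: has_field_derivative_def\<close>)
  have fy: "((\<lambda>y. P (x, y)) has_derivative blinfun_apply (blinfun_mult_right (partial True P (x, y)))) (at y within Y)"
    if "x \<in> X" "y \<in> Y" for x y
  proof -
    have "(x, y) \<in> U" using XY that by auto
    then have "((\<lambda>y. P (x, y)) has_derivative (*) (partial True P (x, y))) (at y)"
      using line_y[OF C, of x y] by (simp add: has_field_derivative_def)
    moreover have "blinfun_apply (blinfun_mult_right (partial True P (x, y))) = (*) (partial True P (x, y))"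
      by (rule ext) simp
    ultimately show ?thesis by (simp add: has_derivative_at_withinI)
  qed
  have cP: "continuous (at (a, b)) (partial True P)"
    using Cm_partial_cont[OF C] U p ab continuous_on_eq_continuous_at by blast
  have "continuous (at (a, b) within X \<times> Y) (\<lambda>q. blinfun_mult_right (partial True P q))"
    by (rule bounded_linear.continuous[OF bounded_linear_blinfun_mult_right],
        rule continuous_at_imp_continuous_within, rule cP)
  then have fyc: "continuous (at (a, b) within X \<times> Y) (\<lambda>(x, y). blinfun_mult_right (partial True P (x, y)))"
    by (simp add: case_prod_beta')
  have bY: "b \<in> Y" "convex Y" using e unfolding Y_def by auto
  have "((\<lambda>(x, y). P (x, y)) has_derivative (\<lambda>(tx, ty). partial False P (a, b) * tx + blinfun_apply (blinfun_mult_right (partial True P (a, b))) ty)) (at (a, b) within X \<times> Y)"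
    by (rule has_derivative_partialsI[OF fx fy fyc bY]) auto
  moreover have "at (a, b) within X \<times> Y = at (a, b)"
    using AB e unfolding X_def Y_def by (intro at_within_open) (auto intro: open_Times)
  ultimately show ?thesis unfolding ab by (simp add: case_prod_beta')
qed

lemma unit_box_convex: "convex unit_box"
  unfolding convex_def unit_box_def
proof (intro ballI allI impI, clarsimp)
  fix a b c d u v :: real
  assume h: "\<bar>a\<bar> \<le> 1" "\<bar>b\<bar> \<le> 1" "\<bar>c\<bar> \<le> 1" "\<bar>d\<bar> \<le> 1" "0 \<le> u" "0 \<le> v" "u + v = 1"
  have "\<bar>u * a + v * c\<bar> \<le> u * \<bar>a\<bar> + v * \<bar>c\<bar>" using h by (simp add: abs_mult abs_triangle_ineq order_trans[OF abs_triangle_ineq])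
  also have "\<dots> \<le> u * 1 + v * 1" using h by (intro add_mono mult_left_mono) auto
  finally have 1: "\<bar>u * a + v * c\<bar> \<le> 1" using h by simp
  have "\<bar>u * b + v * d\<bar> \<le> u * \<bar>b\<bar> + v * \<bar>d\<bar>" using h by (simp add: abs_mult abs_triangle_ineq order_trans[OF abs_triangle_ineq])
  also have "\<dots> \<le> u * 1 + v * 1" using h by (intro add_mono mult_left_mono) auto
  finally have 2: "\<bar>u * b + v * d\<bar> \<le> 1" using h by simp
  show "\<bar>u * a + v * c\<bar> \<le> 1 \<and> \<bar>u * b + v * d\<bar> \<le> 1" using 1 2 by simp
qed

lemma box_lip: assumes C: "Cm_on (Suc n) P U" and U: "open U" "unit_box \<subseteq> U"
  and bd: "\<And>b p. p \<in> unit_box \<Longrightarrow> \<bar>partial b P p\<bar> \<le> \<beta>"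
  and pq: "p \<in> unit_box" "q \<in> unit_box"
  shows "\<bar>P p - P q\<bar> \<le> 2 * \<beta> * norm (p - q)"
proof -
  have "norm (P p - P q) \<le> 2 * \<beta> * norm (p - q)"
  proof (rule differentiable_bound[OF unit_box_convex _ _ pq])
    fix x assume x: "x \<in> unit_box"
    show "(P has_derivative (\<lambda>v. partial False P x * fst v + partial True P x * snd v)) (at x within unit_box)"
      by (rule has_derivative_at_withinI, rule frechet[OF C U(1)]) (use x U(2) in auto)
    show "onorm (\<lambda>v. partial False P x * fst v + partial True P x * snd v) \<le> 2 * \<beta>"
    proof (rule onorm_le)
      fix v :: "real \<times> real"
      have "norm (partial False P x * fst v + partial True P x * snd v)
          \<le> \<bar>partial False P x\<bar> * \<bar>fst v\<bar> + \<bar>partial True P x\<bar> * \<bar>snd v\<bar>"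
        by (simp add: abs_mult order_trans[OF abs_triangle_ineq])
      also have "\<dots> \<le> \<beta> * norm v + \<beta> * norm v"
      proof (intro add_mono mult_mono)
        show "\<bar>fst v\<bar> \<le> norm v" using norm_fst_le[of "fst v" "snd v"] by simp
        show "\<bar>snd v\<bar> \<le> norm v" using norm_snd_le[of "snd v" "fst v"] by simp
      qed (use bd[OF x, of False] bd[OF x, of True] in \<open>auto intro: order_trans[OF abs_ge_zero]\<close>)
      finally show "norm (partial False P x * fst v + partial True P x * snd v) \<le> 2 * \<beta> * norm v" by simp
    qed
  qed
  then show ?thesis by simp
qed

lemma curve_deriv: assumes C: "Cm_on (Suc n) P U" and U: "open U" "unit_box \<subseteq> U"
  and t: "t \<in> II" "\<bar>F t\<bar> \<le> 1" and F: "(F has_real_derivative F') (at t within II)"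
  shows "((\<lambda>t. P (t, F t)) has_real_derivative partial False P (t, F t) + partial True P (t, F t) * F') (at t within II)"
proof -
  have inU: "(t, F t) \<in> U" using t U(2) unfolding unit_box_def by auto
  have g: "((\<lambda>t. (t, F t)) has_derivative (\<lambda>h. (h, F' * h))) (at t within II)"
    using F by (intro has_derivative_Pair has_derivative_ident) (simp add: has_field_derivative_def)
  have "((\<lambda>t. P (t, F t)) has_derivative
     (\<lambda>h. partial False P (t, F t) * fst (h, F' * h) + partial True P (t, F t) * snd (h, F' * h))) (at t within II)"
    using has_derivative_compose[OF g frechet[OF C U(1) inU]] .
  then show ?thesis unfolding has_field_derivative_def
    by (rule has_derivative_eq_rhs) (auto simp: algebra_simps)
qed

lemma box_mem: "t \<in> II \<Longrightarrow> \<bar>F t\<bar> \<le> 1 \<Longrightarrow> (t, F t) \<in> unit_box"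
  unfolding unit_box_def by auto

lemma comp_Cf: "\<exists>K>0. \<forall>P c \<beta> F U. open U \<and> unit_box \<subseteq> U \<and> Cm_on (m + 1) P U \<and> 0 \<le> \<beta> \<and>
   (\<forall>p\<in>unit_box. \<bar>P p - c\<bar> \<le> \<beta>) \<and>
   (\<forall>ds. 1 \<le> length ds \<and> length ds \<le> m + 1 \<longrightarrow> (\<forall>p\<in>unit_box. \<bar>iter_partial ds P p\<bar> \<le> \<beta>)) \<and>
   Cf L m 1 F \<longrightarrow> Cf L m (K * \<beta>) (\<lambda>t. P (t, F t) - c)"
proof (induction m)
  case 0
  show ?case
  proof (intro exI[of _ 4] conjI allI impI)
    fix P c \<beta> F U
    assume a: "open U \<and> unit_box \<subseteq> U \<and> Cm_on (0 + 1) P U \<and> 0 \<le> \<beta> \<and>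
      (\<forall>p\<in>unit_box. \<bar>P p - c\<bar> \<le> \<beta>) \<and>
      (\<forall>ds. 1 \<le> length ds \<and> length ds \<le> 0 + 1 \<longrightarrow> (\<forall>p\<in>unit_box. \<bar>iter_partial ds P p\<bar> \<le> \<beta>)) \<and>
      Cf L 0 1 F"
    have C: "Cm_on (Suc 0) P U" using a by simp
    have F: "continuous_on II F" "\<forall>x\<in>II. \<bar>F x\<bar> \<le> 1"
      "L \<longrightarrow> (\<forall>x\<in>II. \<forall>y\<in>II. \<bar>F x - F y\<bar> \<le> 1 * \<bar>x - y\<bar>)" using a by (auto simp: Cf_0_iff)
    have mem: "\<And>t. t \<in> II \<Longrightarrow> (t, F t) \<in> unit_box" using F(2) box_mem by auto
    have cP: "continuous_on U P" using Cm_cont[OF C] .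
    have "continuous_on II (\<lambda>t. (t, F t))" using F(1) by (intro continuous_intros)
    moreover have "(\<lambda>t. (t, F t)) ` II \<subseteq> U" using mem a by auto
    ultimately have c1: "continuous_on II (\<lambda>t. P (t, F t))"
      using continuous_on_compose2[OF cP, of II "\<lambda>t. (t, F t)"] by blast
    have c2: "continuous_on II (\<lambda>t. P (t, F t) - c)" using c1 by (intro continuous_intros)
    have b: "\<forall>t\<in>II. \<bar>P (t, F t) - c\<bar> \<le> 4 * \<beta>" using a mem by force
    have l: "L \<longrightarrow> (\<forall>x\<in>II. \<forall>y\<in>II. \<bar>(P (x, F x) - c) - (P (y, F y) - c)\<bar> \<le> 4 * \<beta> * \<bar>x - y\<bar>)"
    proof (intro impI ballI)
      fix x y assume L: L and xy: "x \<in> II" "y \<in> II"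
      have pb: "\<And>b p. p \<in> unit_box \<Longrightarrow> \<bar>partial b P p\<bar> \<le> \<beta>"
        using a by (metis iter_partial_single le_refl length_Cons list.size(3) One_nat_def add_0)
      have "\<bar>P (x, F x) - P (y, F y)\<bar> \<le> 2 * \<beta> * norm ((x, F x) - (y, F y))"
        using box_lip[OF C _ _ pb mem mem] a xy by auto
      also have "norm ((x, F x) - (y, F y)) \<le> 2 * \<bar>x - y\<bar>"
      proof -
        have "norm ((x, F x) - (y, F y)) = norm (x - y, F x - F y)" by simp
        also have "\<dots> \<le> norm (x - y) + norm (F x - F y)" by (rule norm_Pair_le)
        also have "\<dots> \<le> \<bar>x - y\<bar> + 1 * \<bar>x - y\<bar>" using F(3) L xy by auto
        finally show ?thesis by simp
      qed
      then have "2 * \<beta> * norm ((x, F x) - (y, F y)) \<le> 2 * \<beta> * (2 * \<bar>x - y\<bar>)"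
        using a by (intro mult_left_mono) auto
      finally show "\<bar>(P (x, F x) - c) - (P (y, F y) - c)\<bar> \<le> 4 * \<beta> * \<bar>x - y\<bar>" by simp
    qed
    show "Cf L 0 (4 * \<beta>) (\<lambda>t. P (t, F t) - c)" unfolding Cf_0_iff using c2 b l by blast
  qed simp
next
  case (Suc m)
  then obtain K where K: "K > 0" "\<forall>P c \<beta> F U. open U \<and> unit_box \<subseteq> U \<and> Cm_on (m + 1) P U \<and> 0 \<le> \<beta> \<and>
   (\<forall>p\<in>unit_box. \<bar>P p - c\<bar> \<le> \<beta>) \<and>
   (\<forall>ds. 1 \<le> length ds \<and> length ds \<le> m + 1 \<longrightarrow> (\<forall>p\<in>unit_box. \<bar>iter_partial ds P p\<bar> \<le> \<beta>)) \<and>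
   Cf L m 1 F \<longrightarrow> Cf L m (K * \<beta>) (\<lambda>t. P (t, F t) - c)" by blast
  define K' where "K' = 1 + K + 2 ^ (m + 1) * K"
  show ?case
  proof (intro exI[of _ K'] conjI allI impI)
    show "0 < K'" using K unfolding K'_def by (simp add: add_pos_pos)
    fix P c \<beta> F U
    assume a: "open U \<and> unit_box \<subseteq> U \<and> Cm_on (Suc m + 1) P U \<and> 0 \<le> \<beta> \<and>
      (\<forall>p\<in>unit_box. \<bar>P p - c\<bar> \<le> \<beta>) \<and>
      (\<forall>ds. 1 \<le> length ds \<and> length ds \<le> Suc m + 1 \<longrightarrow> (\<forall>p\<in>unit_box. \<bar>iter_partial ds P p\<bar> \<le> \<beta>)) \<and>
      Cf L (Suc m) 1 F"
    have C: "Cm_on (Suc (m + 1)) P U" using a by simp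
    have Fs: "Cf L (Suc m) 1 F" using a by simp
    have mem: "\<And>t. t \<in> II \<Longrightarrow> (t, F t) \<in> unit_box" using Cf_bound[OF Fs] box_mem by auto
    have IHb: "Cf L m (K * \<beta>) (\<lambda>t. partial b P (t, F t) - 0)" for b
    proof -
      have "\<forall>p\<in>unit_box. \<bar>partial b P p - 0\<bar> \<le> \<beta>"
        using a by (metis iter_partial_single le_add2 le_refl length_Cons list.size(3) One_nat_def diff_zero add_0 Suc_eq_plus1 add_Suc_right)
      moreover have "\<forall>ds. 1 \<le> length ds \<and> length ds \<le> m + 1 \<longrightarrow> (\<forall>p\<in>unit_box. \<bar>iter_partial ds (partial b P) p\<bar> \<le> \<beta>)"
        using a unfolding iter_partial_snoc by auto
      moreover have "Cm_on (m + 1) (partial b P) U" using Cm_on_partial[OF C] .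
      moreover have "Cf L m 1 F" using Cf_down[OF Fs] .
      ultimately show ?thesis using K(2) a by blast
    qed
    have DF: "Cf L m 1 (Dv F)" using Cf_Dv(1)[OF Fs] .
    have pr: "Cf L m (2 ^ (m + 1) * (K * \<beta>) * 1) (\<lambda>t. (partial True P (t, F t) - 0) * Dv F t)"
      using Cf_mult[OF IHb DF] .
    have sm: "Cf L m (K * \<beta> + 2 ^ (m + 1) * (K * \<beta>) * 1)
       (\<lambda>t. (partial False P (t, F t) - 0) + (partial True P (t, F t) - 0) * Dv F t)"
      using Cf_add[OF IHb pr] .
    have sm': "Cf L m (K' * \<beta>) (\<lambda>t. (partial False P (t, F t) - 0) + (partial True P (t, F t) - 0) * Dv F t)"
      by (rule Cf_mono[OF sm]) (use a in \<open>auto simp: K'_def algebra_simps\<close>)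
    have d: "((\<lambda>t. P (t, F t) - c) has_real_derivative
        (partial False P (t, F t) - 0) + (partial True P (t, F t) - 0) * Dv F t) (at t within II)"
      if "t \<in> II" for t
    proof -
      have "((\<lambda>t. P (t, F t)) has_real_derivative partial False P (t, F t) + partial True P (t, F t) * Dv F t) (at t within II)"
        using curve_deriv[OF C _ _ that _ Cf_Dv(2)[OF Fs that]] a Cf_bound[OF Fs that] by auto
      then show ?thesis by (auto intro!: derivative_eq_intros)
    qed
    have b: "\<bar>P (t, F t) - c\<bar> \<le> K' * \<beta>" if "t \<in> II" for t
    proof -
      have "\<bar>P (t, F t) - c\<bar> \<le> \<beta>" using a mem[OF that] by blast
      also have "\<dots> \<le> K' * \<beta>"
      proof -
        have "0 \<le> (2::real) ^ (m + 1) * K" using K by simp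
        then have K1: "1 \<le> K'" using K unfolding K'_def by linarith
        show ?thesis using mult_right_mono[OF K1, of \<beta>] a by simp
      qed
      finally show ?thesis .
    qed
    show "Cf L (Suc m) (K' * \<beta>) (\<lambda>t. P (t, F t) - c)"
      apply (rule Cf_SucI[of _ _ "\<lambda>t. (partial False P (t, F t) - 0) + (partial True P (t, F t) - 0) * Dv F t"])
      using b d sm' by auto
  qed
qed

lemma uniform_const:
  fixes m :: nat and P :: "nat \<Rightarrow> real \<Rightarrow> bool"
  assumes "\<And>j. j \<le> m \<Longrightarrow> \<exists>K>0. P j K" and "\<And>j K K'. P j K \<Longrightarrow> K \<le> K' \<Longrightarrow> P j K'"
  shows "\<exists>K>0. \<forall>j\<le>m. P j K"
  using assms(1)
proof (induction m)
  case 0 then show ?case by auto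
next
  case (Suc m)
  then obtain K1 where K1: "K1 > 0" "\<forall>j\<le>m. P j K1" by (meson le_Suc_eq)
  obtain K2 where K2: "K2 > 0" "P (Suc m) K2" using Suc.prems by blast
  have "\<forall>j\<le>Suc m. P j (max K1 K2)"
    using K1 K2 assms(2) by (metis le_Suc_eq max.cobounded1 max.cobounded2)
  then show ?case using K1 by (intro exI[of _ "max K1 K2"]) auto
qed

lemma Ck_Cf: assumes "Ck_interval k F DF" "\<forall>j\<le>k. \<forall>x\<in>II. \<bar>DF j x\<bar> \<le> 1"
  "L \<longrightarrow> (\<forall>x\<in>II. \<forall>y\<in>II. \<bar>DF k x - DF k y\<bar> \<le> \<bar>x - y\<bar>)" "i \<le> k"
  shows "Cf L (k - i) 1 (DF i)"
  unfolding Cf_def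
proof (intro exI[of _ "\<lambda>j. DF (j + i)"] conjI)
  show "Cb L (k - i) 1 (\<lambda>j. DF (j + i))"
    unfolding Cb_def using assms unfolding Ck_interval_def by (auto simp: add.commute)
qed simp

lemma Dvpow_family: "Ck_interval k F DF \<Longrightarrow> i + j \<le> k \<Longrightarrow> x \<in> II \<Longrightarrow> (Dv ^^ j) (DF i) x = DF (i + j) x"
proof (induction j arbitrary: i)
  case 0 then show ?case by simp
next
  case (Suc j)
  have e: "Dv (DF i) y = DF (Suc i) y" if "y \<in> II" for y
    using Suc.prems that unfolding Ck_interval_def by (intro Dv_eq) auto
  have "(Dv ^^ j) (Dv (DF i)) x = (Dv ^^ j) (DF (Suc i)) x" by (rule Dvpow_cong[OF e Suc.prems(3)])
  also have "\<dots> = DF (Suc i + j) x" using Suc.IH[of "Suc i"] Suc.prems by auto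
  finally show ?case by (simp del: funpow.simps add: funpow_Suc_right)
qed

lemma bounded_family: "(\<forall>j\<le>(k::nat). continuous_on II ((D :: nat \<Rightarrow> real \<Rightarrow> real) j)) \<Longrightarrow> \<exists>M. \<forall>j\<le>k. \<forall>x\<in>II. \<bar>D j x\<bar> \<le> M"
proof (induction k)
  case 0
  have "compact (D 0 ` II)" using 0 by (intro compact_continuous_image) auto
  then obtain a where "\<forall>y\<in>D 0 ` II. norm y \<le> a" using compact_imp_bounded bounded_iff by metis
  then show ?case by auto
next
  case (Suc k)
  then obtain M where M: "\<forall>j\<le>k. \<forall>x\<in>II. \<bar>D j x\<bar> \<le> M" by auto
  have "compact (D (Suc k) ` II)" using Suc.prems by (intro compact_continuous_image) auto
  then obtain a where a: "\<forall>y\<in>D (Suc k) ` II. norm y \<le> a" using compact_imp_bounded bounded_iff by metis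
  have "\<forall>j\<le>Suc k. \<forall>x\<in>II. \<bar>D j x\<bar> \<le> max M a"
    using M a by (metis atLeastAtMost_iff image_eqI le_Suc_eq max.coboundedI1 max.coboundedI2 real_norm_def)
  then show ?case by blast
qed

lemma Ck_sem_upper: assumes "\<forall>j\<le>k. continuous_on II (D j)" "1 \<le> j" "j \<le> k" "x \<in> II"
  shows "\<bar>D j x\<bar> \<le> Ck_seminorm k D"
proof -
  obtain M where M: "\<forall>j\<le>k. \<forall>x\<in>II. \<bar>D j x\<bar> \<le> M" using bounded_family[OF assms(1)] by auto
  have bd: "bdd_above ((\<lambda>(j, x). \<bar>D j x\<bar>) ` ({1..k} \<times> {-1..1}))"
    using M by (auto intro!: bdd_aboveI[of _ M])
  have mem: "\<bar>D j x\<bar> \<in> (\<lambda>(j, x). \<bar>D j x\<bar>) ` ({1..k} \<times> {-1..1})"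
    using assms by force
  show ?thesis unfolding Ck_seminorm_def by (rule cSup_upper[OF mem bd])
qed

lemma Ck_sem_le: assumes "1 \<le> k" "\<And>j x. 1 \<le> j \<Longrightarrow> j \<le> k \<Longrightarrow> x \<in> II \<Longrightarrow> \<bar>D j x\<bar> \<le> M"
  shows "Ck_seminorm k D \<le> M"
  unfolding Ck_seminorm_def
proof (rule cSup_least)
  show "(\<lambda>(j, x). \<bar>D j x\<bar>) ` ({1..k} \<times> {-1..1}) \<noteq> {}" using assms by auto
  show "\<And>y. y \<in> (\<lambda>(j, x). \<bar>D j x\<bar>) ` ({1..k} \<times> {- 1..1}) \<Longrightarrow> y \<le> M" using assms(2) by auto
qed

lemma Lip_sem_upper: assumes "\<forall>x\<in>II. \<forall>y\<in>II. \<bar>D k x - D k y\<bar> \<le> M * \<bar>x - y\<bar>" "x \<in> II" "y \<in> II"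
  shows "\<bar>D k x - D k y\<bar> \<le> Lip_seminorm k D * \<bar>x - y\<bar>"
proof (cases "x = y")
  case True then show ?thesis by simp
next
  case False
  have bd: "bdd_above {\<bar>D k x - D k y\<bar> / \<bar>x - y\<bar> | x y. x \<in> {-1..1} \<and> y \<in> {-1..1} \<and> x \<noteq> y}"
  proof (rule bdd_aboveI[of _ M], clarsimp)
    fix x y :: real assume "-1 \<le> x" "x \<le> 1" "-1 \<le> y" "y \<le> 1" "x \<noteq> y"
    then show "\<bar>D k x - D k y\<bar> / \<bar>x - y\<bar> \<le> M" using assms(1) by (simp add: divide_le_eq)
  qed
  have mem: "\<bar>D k x - D k y\<bar> / \<bar>x - y\<bar> \<in> {\<bar>D k x - D k y\<bar> / \<bar>x - y\<bar> | x y. x \<in> {-1..1} \<and> y \<in> {-1..1} \<and> x \<noteq> y}"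
    using assms False by blast
  have "\<bar>D k x - D k y\<bar> / \<bar>x - y\<bar> \<le> Lip_seminorm k D" unfolding Lip_seminorm_def by (rule cSup_upper[OF mem bd])
  then show ?thesis using False by (simp add: divide_le_eq)
qed

lemma Lip_sem_nonneg: assumes "\<forall>x\<in>II. \<forall>y\<in>II. \<bar>D k x - D k y\<bar> \<le> M * \<bar>x - y\<bar>"
  shows "0 \<le> Lip_seminorm k D"
proof -
  have "\<bar>D k 1 - D k (-1)\<bar> \<le> Lip_seminorm k D * \<bar>1 - (-1)\<bar>"
    using Lip_sem_upper[of D k M 1 "-1"] assms by auto
  then have "0 \<le> Lip_seminorm k D * 2" by simp
  then show ?thesis by simp
qed

lemma Lip_sem_le: assumes "\<And>x y. x \<in> II \<Longrightarrow> y \<in> II \<Longrightarrow> x \<noteq> y \<Longrightarrow> \<bar>D k x - D k y\<bar> / \<bar>x - y\<bar> \<le> M"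
  shows "Lip_seminorm k D \<le> M"
  unfolding Lip_seminorm_def
proof (rule cSup_least)
  have "\<bar>D k 1 - D k (-1)\<bar> / \<bar>1 - (-1)\<bar> \<in> {\<bar>D k x - D k y\<bar> / \<bar>x - y\<bar> | x y. x \<in> {-1..1} \<and> y \<in> {-1..1} \<and> x \<noteq> y}"
    by (intro CollectI exI[of _ 1] exI[of _ "-1"]) auto
  then show "{\<bar>D k x - D k y\<bar> / \<bar>x - y\<bar> | x y. x \<in> {-1..1} \<and> y \<in> {-1..1} \<and> x \<noteq> y} \<noteq> {}" by blast
  show "\<And>z. z \<in> {\<bar>D k x - D k y\<bar> / \<bar>x - y\<bar> | x y. x \<in> {-1..1} \<and> y \<in> {-1..1} \<and> x \<noteq> y} \<Longrightarrow> z \<le> M"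
    using assms by auto
qed

lemma mvt_lower: assumes d: "\<And>t. t \<in> II \<Longrightarrow> (g has_real_derivative g' t) (at t within II)"
  and lb: "\<And>t. t \<in> II \<Longrightarrow> c \<le> g' t" and st: "s \<in> II" "t \<in> II" "s \<le> t"
  shows "c * (t - s) \<le> g t - g s"
proof (cases "s = t")
  case True then show ?thesis by simp
next
  case False
  then have lt: "s < t" using st by simp
  have "\<exists>x\<in>{s<..<t}. g t - g s = (\<lambda>h. g' x * h) (t - s)"
  proof (rule mvt_simple[OF lt])
    fix x assume "s \<le> x" "x \<le> t"
    then have "x \<in> II" using st by auto
    then have "(g has_real_derivative g' x) (at x within {s..t})"
      using d has_field_derivative_subset[of g "g' x" x II "{s..t}"] st by auto
    then show "(g has_derivative (\<lambda>h. g' x * h)) (at x within {s..t})"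
      by (simp add: has_field_derivative_def mult_commute_abs)
  qed
  then obtain x where x: "x \<in> {s<..<t}" "g t - g s = g' x * (t - s)" by auto
  have "x \<in> II" using x st by auto
  then show ?thesis using x lb[of x] lt by (simp add: mult_right_mono)
qed

lemma inv_fun:
  assumes d: "\<And>t. t \<in> II \<Longrightarrow> (g has_real_derivative g' t) (at t within II)"
    and lb: "\<And>t. t \<in> II \<Longrightarrow> 3/2 \<le> g' t" and g0: "g 0 = 0"
  obtains u where "\<And>x. x \<in> II \<Longrightarrow> u x \<in> {-2/3..2/3} \<and> g (u x) = x"
    "\<And>t. t \<in> II \<Longrightarrow> \<bar>g t\<bar> \<le> 1 \<Longrightarrow> u (g t) = t"
    "\<And>x. x \<in> II \<Longrightarrow> (u has_real_derivative inverse (g' (u x))) (at x within II)"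
proof -
  have mono: "3/2 * (t - s) \<le> g t - g s" if "s \<in> II" "t \<in> II" "s \<le> t" for s t
    using mvt_lower[OF d lb that] by auto
  have inj: "s = t" if "s \<in> II" "t \<in> II" "g s = g t" for s t
  proof (cases "s \<le> t")
    case True
    have "3/2 * (t - s) \<le> g t - g s" by (rule mono[OF that(1,2) True])
    then have "3/2 * (t - s) \<le> 0" using that(3) by simp
    then show ?thesis using True by simp
  next
    case False
    then have "t \<le> s" by simp
    have "3/2 * (s - t) \<le> g s - g t" by (rule mono[OF that(2,1) \<open>t \<le> s\<close>])
    then have "3/2 * (s - t) \<le> 0" using that(3) by simp
    then show ?thesis using False by simp
  qed
  have cg: "continuous_on II g" using d deriv_cont by blast
  have g1: "3/2 \<le> g 1" using mono[of 0 1] g0 by simp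
  have gm1: "g (-1) \<le> -3/2" using mono[of "-1" 0] g0 by simp
  have ex: "\<exists>t. -1 \<le> t \<and> t \<le> 1 \<and> g t = y" if "g (-1) \<le> y" "y \<le> g 1" for y
    using IVT'[of g "-1" y 1] that cg by auto
  define u where "u y = (THE t. t \<in> II \<and> g t = y)" for y
  have u: "u y \<in> II \<and> g (u y) = y" if yy: "g (-1) \<le> y" "y \<le> g 1" for y
  proof -
    obtain t where t: "t \<in> II" "g t = y" using ex[OF yy] by auto
    have "u y = t" unfolding u_def using t inj by blast
    then show ?thesis using t by simp
  qed
  have ug: "u (g t) = t" if "t \<in> II" for t
    unfolding u_def using that inj by blast
  have small: "\<bar>t\<bar> \<le> 2/3 * \<bar>g t\<bar>" if "t \<in> II" for t
  proof (cases "0 \<le> t")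
    case True
    have "3/2 * (t - 0) \<le> g t - g 0" by (rule mono) (use that True in auto)
    then have a: "3/2 * t \<le> g t" using g0 by simp
    then have "\<bar>t\<bar> = t" "\<bar>g t\<bar> = g t" using True by auto
    then show ?thesis using a by simp
  next
    case False
    have "3/2 * (0 - t) \<le> g 0 - g t" by (rule mono) (use that False in auto)
    then have a: "3/2 * (- t) \<le> - g t" using g0 by simp
    then have "\<bar>t\<bar> = - t" "\<bar>g t\<bar> = - g t" using False by auto
    then show ?thesis using a by simp
  qed
  have P1: "u x \<in> {-2/3..2/3} \<and> g (u x) = x" if "x \<in> II" for x
  proof -
    have "u x \<in> II \<and> g (u x) = x" using u[of x] that g1 gm1 by auto
    then show ?thesis using small[of "u x"] that by auto
  qed
  have contu: "continuous_on {g (-1)..g 1} u"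
  proof -
    have "continuous_on (g ` II) u" using continuous_on_inv[OF cg compact_Icc] ug by blast
    moreover have "{g (-1)..g 1} \<subseteq> g ` II" using u by (metis atLeastAtMost_iff image_eqI subsetI)
    ultimately show ?thesis by (rule continuous_on_subset)
  qed
  have P3: "(u has_real_derivative inverse (g' (u x))) (at x within II)" if x: "x \<in> II" for x
  proof -
    have ux: "u x \<in> {-2/3..2/3}" "g (u x) = x" using P1 x by auto
    have "(g has_real_derivative g' (u x)) (at (u x) within II)" using d ux by auto
    moreover have "at (u x) within II = at (u x)" using ux by (intro at_within_Icc_at) auto
    ultimately have dg: "DERIV g (u x) :> g' (u x)" by simp
    have "g' (u x) \<noteq> 0" using lb[of "u x"] ux by auto
    moreover have "g (-1) < x" "x < g 1" using x g1 gm1 by auto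
    moreover have "\<And>y. g (-1) < y \<Longrightarrow> y < g 1 \<Longrightarrow> g (u y) = y" using u by auto
    moreover have "isCont u x"
      using continuous_on_interior[OF contu] x g1 gm1 by auto
    ultimately have "DERIV u x :> inverse (g' (u x))"
      using DERIV_inverse_function[where f=g and g=u and a="g (-1)" and b="g 1" and x=x and D="g' (u x)", OF dg] by blast
    then show ?thesis by (rule has_field_derivative_at_within)
  qed
  show thesis using that P1 ug P3 by blast
qed

definition hyp :: "nat \<Rightarrow> (real \<times> real) set \<Rightarrow> (real \<times> real \<Rightarrow> real \<times> real) \<Rightarrow> real \<Rightarrow> bool" where
 "hyp k U \<phi> \<delta> \<longleftrightarrow> open U \<and> unit_box \<subseteq> U \<and> Cm_on (k + 1) (fst \<circ> \<phi>) U \<and> Cm_on (k + 1) (snd \<circ> \<phi>) U \<and>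
    \<phi> (0, 0) = (0, 0) \<and> (\<phi> has_derivative (\<lambda>(x1, x2). (2 * x1, x2 / 2))) (at (0, 0)) \<and>
    (\<forall>ds. 2 \<le> length ds \<and> length ds \<le> k + 1 \<longrightarrow>
         (\<forall>p\<in>U. \<bar>iter_partial ds (fst \<circ> \<phi>) p\<bar> \<le> \<delta> \<and> \<bar>iter_partial ds (snd \<circ> \<phi>) p\<bar> \<le> \<delta>)) \<and> 0 < \<delta>"

definition gd :: "(real \<times> real \<Rightarrow> real \<times> real) \<Rightarrow> (real \<Rightarrow> real) \<Rightarrow> (nat \<Rightarrow> real \<Rightarrow> real) \<Rightarrow> real \<Rightarrow> real" where
  "gd \<phi> F DF t = partial False (fst \<circ> \<phi>) (t, F t) + partial True (fst \<circ> \<phi>) (t, F t) * DF 1 t"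

definition hdd :: "(real \<times> real \<Rightarrow> real \<times> real) \<Rightarrow> (real \<Rightarrow> real) \<Rightarrow> (nat \<Rightarrow> real \<Rightarrow> real) \<Rightarrow> real \<Rightarrow> real" where
  "hdd \<phi> F DF t = partial False (snd \<circ> \<phi>) (t, F t) + partial True (snd \<circ> \<phi>) (t, F t) * DF 1 t"

definition wf :: "(real \<times> real \<Rightarrow> real \<times> real) \<Rightarrow> (real \<Rightarrow> real) \<Rightarrow> (nat \<Rightarrow> real \<Rightarrow> real) \<Rightarrow> real \<Rightarrow> real" where
  "wf \<phi> F DF t = 1 / gd \<phi> F DF t"

definition f1f :: "(real \<times> real \<Rightarrow> real \<times> real) \<Rightarrow> (real \<Rightarrow> real) \<Rightarrow> (nat \<Rightarrow> real \<Rightarrow> real) \<Rightarrow> real \<Rightarrow> real" where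
  "f1f \<phi> F DF t = hdd \<phi> F DF t * wf \<phi> F DF t"

lemma origin_partials:
  assumes h: "hyp k U \<phi> \<delta>"
  shows "partial False (fst \<circ> \<phi>) (0, 0) = 2" "partial True (fst \<circ> \<phi>) (0, 0) = 0"
        "partial False (snd \<circ> \<phi>) (0, 0) = 0" "partial True (snd \<circ> \<phi>) (0, 0) = 1/2"
proof -
  have U: "open U" "(0, 0) \<in> U" using h unfolding hyp_def unit_box_def by auto
  have C1: "Cm_on (Suc k) (fst \<circ> \<phi>) U" "Cm_on (Suc k) (snd \<circ> \<phi>) U" using h unfolding hyp_def by auto
  have D: "(\<phi> has_derivative (\<lambda>(x1, x2). (2 * x1, x2 / 2))) (at (0, 0))" using h unfolding hyp_def by auto
  have d1: "((\<lambda>p. fst (\<phi> p)) has_derivative (\<lambda>v. fst ((\<lambda>(x1, x2). (2 * x1, x2 / 2)) v))) (at (0, 0))"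
    using has_derivative_fst[OF D] .
  have d2: "((\<lambda>p. snd (\<phi> p)) has_derivative (\<lambda>v. snd ((\<lambda>(x1, x2). (2 * x1, x2 / 2)) v))) (at (0, 0))"
    using has_derivative_snd[OF D] .
  have f1: "((\<lambda>p. fst (\<phi> p)) has_derivative (\<lambda>v. partial False (fst \<circ> \<phi>) (0, 0) * fst v + partial True (fst \<circ> \<phi>) (0, 0) * snd v)) (at (0, 0))"
    using frechet[OF C1(1) U] by (simp add: o_def)
  have f2: "((\<lambda>p. snd (\<phi> p)) has_derivative (\<lambda>v. partial False (snd \<circ> \<phi>) (0, 0) * fst v + partial True (snd \<circ> \<phi>) (0, 0) * snd v)) (at (0, 0))"
    using frechet[OF C1(2) U] by (simp add: o_def)
  have e1: "(\<lambda>v. partial False (fst \<circ> \<phi>) (0, 0) * fst v + partial True (fst \<circ> \<phi>) (0, 0) * snd v) = (\<lambda>v. fst ((\<lambda>(x1, x2). (2 * x1, x2 / 2)) v))"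
    using has_derivative_unique[OF f1 d1] .
  have e2: "(\<lambda>v. partial False (snd \<circ> \<phi>) (0, 0) * fst v + partial True (snd \<circ> \<phi>) (0, 0) * snd v) = (\<lambda>v. snd ((\<lambda>(x1, x2). (2 * x1, x2 / 2)) v))"
    using has_derivative_unique[OF f2 d2] .
  show "partial False (fst \<circ> \<phi>) (0, 0) = 2" using fun_cong[OF e1, of "(1, 0)"] by simp
  show "partial True (fst \<circ> \<phi>) (0, 0) = 0" using fun_cong[OF e1, of "(0, 1)"] by simp
  show "partial False (snd \<circ> \<phi>) (0, 0) = 0" using fun_cong[OF e2, of "(1, 0)"] by simp
  show "partial True (snd \<circ> \<phi>) (0, 0) = 1/2" using fun_cong[OF e2, of "(0, 1)"] by simp
qed

lemma first_partial_bound: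
  assumes h: "hyp k U \<phi> \<delta>" and k: "1 \<le> k" and P: "P = fst \<circ> \<phi> \<or> P = snd \<circ> \<phi>" and p: "p \<in> unit_box"
  shows "\<bar>partial b P p - partial b P (0, 0)\<bar> \<le> 4 * \<delta>"
proof -
  obtain m where m: "k = Suc m" using k by (cases k) auto
  have U: "open U" "unit_box \<subseteq> U" using h unfolding hyp_def by auto
  have C: "Cm_on (Suc (Suc m)) P U" using h P m unfolding hyp_def by auto
  have CQ: "Cm_on (Suc m) (partial b P) U" using Cm_on_partial[OF C] .
  have bd: "\<bar>partial b' (partial b P) q\<bar> \<le> \<delta>" if "q \<in> unit_box" for b' q
  proof -
    have "partial b' (partial b P) q = iter_partial [b', b] P q"
      using iter_partial_snoc[of "[b']" b P] by simp
    moreover have "q \<in> U" using that U by auto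
    ultimately show ?thesis using h P m unfolding hyp_def by auto
  qed
  have z: "(0, 0) \<in> unit_box" unfolding unit_box_def by auto
  have "\<bar>partial b P p - partial b P (0, 0)\<bar> \<le> 2 * \<delta> * norm (p - (0, 0))"
    using box_lip[OF CQ U bd p z] by blast
  also have "norm (p - (0, 0)) \<le> 2"
  proof -
    have "norm p \<le> norm (fst p) + norm (snd p)" using norm_Pair_le[of "fst p" "snd p"] by simp
    also have "\<dots> \<le> 2" using p unfolding unit_box_def by auto
    finally have "norm p \<le> 2" .
    moreover have "p - (0, 0) = p" by (simp add: zero_prod_def[symmetric])
    ultimately show ?thesis by simp
  qed
  then have "2 * \<delta> * norm (p - (0, 0)) \<le> 2 * \<delta> * 2" using h unfolding hyp_def by (intro mult_left_mono) auto
  finally show ?thesis by simp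
qed

lemma lead_uniform: "\<exists>K>0. \<forall>j\<le>m. \<forall>f B r \<rho> w. Cf L m B f \<and> Cf L m \<rho> r \<and> \<rho> \<le> 1 \<and>
    (\<forall>x\<in>II. w x = 1/2 + r x) \<longrightarrow>
    (\<exists>R. Cf L (m - j) (K * B * \<rho>) R \<and> (\<forall>x\<in>II. (Top w ^^ j) f x = (Dv ^^ j) f x / 2 ^ j + R x))"
proof (rule uniform_const)
  fix j assume "j \<le> m"
  then show "\<exists>K>0. \<forall>f B r \<rho> w. Cf L m B f \<and> Cf L m \<rho> r \<and> \<rho> \<le> 1 \<and>
    (\<forall>x\<in>II. w x = 1/2 + r x) \<longrightarrow>
    (\<exists>R. Cf L (m - j) (K * B * \<rho>) R \<and> (\<forall>x\<in>II. (Top w ^^ j) f x = (Dv ^^ j) f x / 2 ^ j + R x))"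
    by (rule lead)
next
  fix j K K' assume P: "\<forall>f B r \<rho> w. Cf L m B f \<and> Cf L m \<rho> r \<and> \<rho> \<le> 1 \<and>
    (\<forall>x\<in>II. w x = 1/2 + r x) \<longrightarrow>
    (\<exists>R. Cf L (m - j) (K * B * \<rho>) R \<and> (\<forall>x\<in>II. (Top w ^^ j) f x = (Dv ^^ j) f x / 2 ^ j + R x))"
    and KK: "K \<le> K'"
  show "\<forall>f B r \<rho> w. Cf L m B f \<and> Cf L m \<rho> r \<and> \<rho> \<le> 1 \<and>
    (\<forall>x\<in>II. w x = 1/2 + r x) \<longrightarrow>
    (\<exists>R. Cf L (m - j) (K' * B * \<rho>) R \<and> (\<forall>x\<in>II. (Top w ^^ j) f x = (Dv ^^ j) f x / 2 ^ j + R x))"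
  proof (intro allI impI)
    fix f B r \<rho> w assume a: "Cf L m B f \<and> Cf L m \<rho> r \<and> \<rho> \<le> 1 \<and> (\<forall>x\<in>II. w x = 1/2 + r x)"
    then obtain R where R: "Cf L (m - j) (K * B * \<rho>) R" "\<forall>x\<in>II. (Top w ^^ j) f x = (Dv ^^ j) f x / 2 ^ j + R x"
      using P by blast
    have "0 \<le> B * \<rho>" using a Cf_B_nonneg by auto
    then have "K * B * \<rho> \<le> K' * B * \<rho>" using KK mult_right_mono[OF KK, of "B * \<rho>"] by (simp add: mult.assoc)
    then show "\<exists>R. Cf L (m - j) (K' * B * \<rho>) R \<and> (\<forall>x\<in>II. (Top w ^^ j) f x = (Dv ^^ j) f x / 2 ^ j + R x)"
      using R Cf_mono by blast
  qed
qed

lemma pipeline: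
  assumes k: "1 \<le> k"
  shows "\<exists>\<delta>1>0. \<exists>C1>0. \<forall>U \<phi> \<delta> F DF. hyp k U \<phi> \<delta> \<and> \<delta> \<le> \<delta>1 \<and> Ck_interval k F DF \<and>
    (\<forall>j\<le>k. \<forall>x\<in>II. \<bar>DF j x\<bar> \<le> 1) \<and> (L \<longrightarrow> (\<forall>x\<in>II. \<forall>y\<in>II. \<bar>DF k x - DF k y\<bar> \<le> \<bar>x - y\<bar>)) \<longrightarrow>
    (\<forall>t\<in>II. 3/2 \<le> gd \<phi> F DF t \<and> \<bar>wf \<phi> F DF t\<bar> \<le> 1) \<and>
    (\<forall>i. 1 \<le> i \<and> i \<le> k \<longrightarrow> (\<exists>Rem. Cf L (k - i) (C1 * \<delta>) Rem \<and>
        (\<forall>t\<in>II. (Top (wf \<phi> F DF) ^^ (i - 1)) (f1f \<phi> F DF) t = DF i t / 2 ^ (i + 1) + Rem t)))"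
proof -
  obtain m where m: "k = Suc m" using k by (cases k) auto
  obtain Kc where Kc: "Kc > 0" "\<forall>P c \<beta> F U. open U \<and> unit_box \<subseteq> U \<and> Cm_on (m + 1) P U \<and> 0 \<le> \<beta> \<and>
   (\<forall>p\<in>unit_box. \<bar>P p - c\<bar> \<le> \<beta>) \<and>
   (\<forall>ds. 1 \<le> length ds \<and> length ds \<le> m + 1 \<longrightarrow> (\<forall>p\<in>unit_box. \<bar>iter_partial ds P p\<bar> \<le> \<beta>)) \<and>
   Cf L m 1 F \<longrightarrow> Cf L m (Kc * \<beta>) (\<lambda>t. P (t, F t) - c)"
    using comp_Cf[of m L] by blast
  obtain Ki0 where Ki0: "\<forall>f. Cf L m 3 f \<and> (\<forall>x\<in>II. 1 \<le> f x) \<longrightarrow> Cf L m Ki0 (\<lambda>x. 1 / f x)"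
    using Cf_inv[of 1 L m 3] by auto
  define Ki where "Ki = max Ki0 1"
  have Kipos: "Ki > 0" unfolding Ki_def by simp
  have Ki: "\<And>f. Cf L m 3 f \<Longrightarrow> (\<forall>x\<in>II. 1 \<le> f x) \<Longrightarrow> Cf L m Ki (\<lambda>x. 1 / f x)"
    using Ki0 Cf_mono[of L m Ki0 _ Ki] unfolding Ki_def by auto
  obtain Kl where Kl: "Kl > 0" "\<forall>j\<le>m. \<forall>f B r \<rho> w. Cf L m B f \<and> Cf L m \<rho> r \<and> \<rho> \<le> 1 \<and>
    (\<forall>x\<in>II. w x = 1/2 + r x) \<longrightarrow>
    (\<exists>R. Cf L (m - j) (Kl * B * \<rho>) R \<and> (\<forall>x\<in>II. (Top w ^^ j) f x = (Dv ^^ j) f x / 2 ^ j + R x))"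
    using lead_uniform[of m L] by blast
  define ce where "ce = 4 * Kc * (1 + 2 ^ (m + 1))"
  define cr where "cr = 2 ^ (m + 1) * ce * Ki / 2"
  define cS where "cS = 2 ^ (m + 1) * cr / 2 + 2 ^ (m + 1) * ce * Ki"
  define C1 where "C1 = cS + Kl * cr"
  define \<delta>1 where "\<delta>1 = 1 / (2 * ce + 2 * cr + 2 * cS + 1)"
  have ce0: "ce > 0" unfolding ce_def using Kc by (simp add: add_pos_pos)
  have cr0: "cr > 0" unfolding cr_def using ce0 Kipos by simp
  have cS0: "cS > 0" unfolding cS_def using cr0 ce0 Kipos by (simp add: add_pos_pos)
  have C10: "C1 > 0" unfolding C1_def using cS0 Kl cr0 by (simp add: add_pos_pos)
  have d10: "\<delta>1 > 0" unfolding \<delta>1_def using ce0 cr0 cS0 by simp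
  show ?thesis
  proof (rule exI[of _ \<delta>1], rule conjI[OF d10], rule exI[of _ C1], rule conjI[OF C10], intro allI impI)
    fix U \<phi> \<delta> F DF
    assume A: "hyp k U \<phi> \<delta> \<and> \<delta> \<le> \<delta>1 \<and> Ck_interval k F DF \<and>
      (\<forall>j\<le>k. \<forall>x\<in>II. \<bar>DF j x\<bar> \<le> 1) \<and> (L \<longrightarrow> (\<forall>x\<in>II. \<forall>y\<in>II. \<bar>DF k x - DF k y\<bar> \<le> \<bar>x - y\<bar>))"
    have h: "hyp k U \<phi> \<delta>" using A by blast
    have dpos: "0 < \<delta>" using h unfolding hyp_def by blast
    have U: "open U" "unit_box \<subseteq> U" using h unfolding hyp_def by auto
    have "\<delta> * (2 * ce + 2 * cr + 2 * cS + 1) \<le> \<delta>1 * (2 * ce + 2 * cr + 2 * cS + 1)"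
      using A ce0 cr0 cS0 by (intro mult_right_mono) auto
    also have "\<dots> = 1" unfolding \<delta>1_def using ce0 cr0 cS0 by simp
    finally have dd: "\<delta> * (2 * ce + 2 * cr + 2 * cS + 1) \<le> 1" .
    have p: "0 \<le> ce * \<delta>" "0 \<le> cr * \<delta>" "0 \<le> cS * \<delta>" using dpos ce0 cr0 cS0 by auto
    have dd': "\<delta> + 2 * (ce * \<delta>) + 2 * (cr * \<delta>) + 2 * (cS * \<delta>) \<le> 1" using dd by (simp add: algebra_simps)
    have sm: "ce * \<delta> \<le> 1/2" "cr * \<delta> \<le> 1/2" "cS * \<delta> \<le> 1/2"
      using dd' p dpos by linarith+
    have CkI: "Ck_interval k F DF" using A by blast
    have DFb: "\<forall>j\<le>k. \<forall>x\<in>II. \<bar>DF j x\<bar> \<le> 1" using A by blast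
    have DFL: "L \<longrightarrow> (\<forall>x\<in>II. \<forall>y\<in>II. \<bar>DF k x - DF k y\<bar> \<le> \<bar>x - y\<bar>)" using A by blast
    have F0: "DF 0 = F" using CkI unfolding Ck_interval_def by blast
    have Fk: "Cf L k 1 F" using Ck_Cf[OF CkI DFb DFL, of 0] F0 by simp
    have Fm: "Cf L m 1 F" using Cf_down[of L m 1 F] Fk m by simp
    have DF1: "Cf L m 1 (DF 1)" using Ck_Cf[OF CkI DFb DFL, of 1] m by simp
    have compA: "Cf L m (Kc * (4 * \<delta>)) (\<lambda>t. partial b P (t, F t) - partial b P (0, 0))"
      if P: "P = fst \<circ> \<phi> \<or> P = snd \<circ> \<phi>" for b P
    proof -
      have CP: "Cm_on (Suc (Suc m)) P U" using h P m unfolding hyp_def by auto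
      have c1: "Cm_on (m + 1) (partial b P) U" using Cm_on_partial[OF CP] by simp
      have c2: "\<forall>p\<in>unit_box. \<bar>partial b P p - partial b P (0, 0)\<bar> \<le> 4 * \<delta>"
        using first_partial_bound[OF h k P] by blast
      have c3: "\<forall>ds. 1 \<le> length ds \<and> length ds \<le> m + 1 \<longrightarrow> (\<forall>p\<in>unit_box. \<bar>iter_partial ds (partial b P) p\<bar> \<le> 4 * \<delta>)"
      proof (intro allI impI ballI)
        fix ds :: "bool list" and p assume ds: "1 \<le> length ds \<and> length ds \<le> m + 1" and p: "p \<in> unit_box"
        have "\<bar>iter_partial (ds @ [b]) P p\<bar> \<le> \<delta>" using h P m ds p U unfolding hyp_def by auto
        then show "\<bar>iter_partial ds (partial b P) p\<bar> \<le> 4 * \<delta>" using dpos unfolding iter_partial_snoc by simp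
      qed
      have "0 \<le> 4 * \<delta>" using dpos by simp
      then show ?thesis using Kc(2)[rule_format, of U "partial b P" "4 * \<delta>" "partial b P (0, 0)" F] U c1 c2 c3 Fm
        by blast
    qed
    note o = origin_partials[OF h]
    define a where "a = Kc * (4 * \<delta>)"
    define E1 where "E1 = (\<lambda>t. (partial False (fst \<circ> \<phi>) (t, F t) - 2) + (partial True (fst \<circ> \<phi>) (t, F t) - 0) * DF 1 t)"
    define E2 where "E2 = (\<lambda>t. (partial False (snd \<circ> \<phi>) (t, F t) - 0) + (partial True (snd \<circ> \<phi>) (t, F t) - 1/2) * DF 1 t)"
    have aeq: "a + 2 ^ (m + 1) * a * 1 = ce * \<delta>" unfolding a_def ce_def by (simp add: algebra_simps)
    have E1C: "Cf L m (ce * \<delta>) E1"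
      using Cf_add[OF compA[of "fst \<circ> \<phi>" False] Cf_mult[OF compA[of "fst \<circ> \<phi>" True] DF1]]
      unfolding E1_def o aeq[symmetric] a_def by simp
    have E2C: "Cf L m (ce * \<delta>) E2"
      using Cf_add[OF compA[of "snd \<circ> \<phi>" False] Cf_mult[OF compA[of "snd \<circ> \<phi>" True] DF1]]
      unfolding E2_def o aeq[symmetric] a_def by simp
    have gdE: "gd \<phi> F DF = (\<lambda>t. 2 + E1 t)" unfolding gd_def E1_def by (auto simp: algebra_simps)
    have hdE: "hdd \<phi> F DF = (\<lambda>t. 1/2 * DF 1 t + E2 t)" unfolding hdd_def E2_def by (auto simp: algebra_simps)
    have E1b: "\<bar>E1 t\<bar> \<le> 1/2" if "t \<in> II" for t using Cf_bound[OF E1C that] sm by simp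
    have gdb: "3/2 \<le> gd \<phi> F DF t" "gd \<phi> F DF t \<le> 3" if "t \<in> II" for t
      using E1b[OF that] unfolding gdE by auto
    define w where "w = wf \<phi> F DF"
    have wb: "\<bar>w t\<bar> \<le> 1" if "t \<in> II" for t
      using gdb[OF that] unfolding w_def wf_def by (simp add: divide_le_eq)
    have gdC: "Cf L m 3 (gd \<phi> F DF)"
    proof -
      have "Cf L m (2 + ce * \<delta>) (\<lambda>t. 2 + E1 t)" using Cf_add[OF Cf_const[of 2 2] E1C] by simp
      then have "Cf L m 3 (\<lambda>t. 2 + E1 t)" by (rule Cf_mono) (use sm in simp)
      then show ?thesis unfolding gdE .
    qed
    have wC: "Cf L m Ki w" unfolding w_def wf_def using Ki[OF gdC] gdb by force
    define r where "r = (\<lambda>t. w t - 1/2)"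
    have rE: "r t = -(1/2) * (E1 t * w t)" if "t \<in> II" for t
    proof -
      have "2 + E1 t \<noteq> 0" using E1b[OF that] by auto
      then show ?thesis unfolding r_def w_def wf_def gdE by (simp add: field_simps)
    qed
    have rC: "Cf L m (cr * \<delta>) r"
    proof -
      have "Cf L m (\<bar>-(1/2)\<bar> * (2 ^ (m + 1) * (ce * \<delta>) * Ki)) (\<lambda>t. -(1/2) * (E1 t * w t))"
        using Cf_scale[OF Cf_mult[OF E1C wC]] .
      moreover have "\<bar>-(1/2)\<bar> * (2 ^ (m + 1) * (ce * \<delta>) * Ki) = cr * \<delta>" unfolding cr_def by simp
      ultimately show ?thesis using Cf_cong rE by (metis (no_types, lifting))
    qed
    have wr: "\<forall>x\<in>II. w x = 1/2 + r x" unfolding r_def by simp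
    define S where "S = (\<lambda>t. 1/2 * (DF 1 t * r t) + E2 t * w t)"
    have SC: "Cf L m (cS * \<delta>) S"
    proof -
      have "Cf L m (\<bar>1/2\<bar> * (2 ^ (m + 1) * 1 * (cr * \<delta>)) + 2 ^ (m + 1) * (ce * \<delta>) * Ki) S"
        unfolding S_def using Cf_add[OF Cf_scale[OF Cf_mult[OF DF1 rC]] Cf_mult[OF E2C wC]] .
      moreover have "\<bar>1/2\<bar> * (2 ^ (m + 1) * 1 * (cr * \<delta>)) + 2 ^ (m + 1) * (ce * \<delta>) * Ki = cS * \<delta>"
        unfolding cS_def by (simp add: algebra_simps)
      ultimately show ?thesis by simp
    qed
    have f1E: "f1f \<phi> F DF = (\<lambda>t. 1/4 * DF 1 t + S t)"
      unfolding f1f_def hdE S_def r_def w_def by (auto simp: algebra_simps)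
    have f1C: "Cf L m 1 (f1f \<phi> F DF)"
    proof -
      have "Cf L m (\<bar>1/4\<bar> * 1 + cS * \<delta>) (\<lambda>t. 1/4 * DF 1 t + S t)"
        using Cf_add[OF Cf_scale[OF DF1] SC] .
      then have "Cf L m 1 (\<lambda>t. 1/4 * DF 1 t + S t)" by (rule Cf_mono) (use sm in simp)
      then show ?thesis unfolding f1E .
    qed
    have rho1: "cr * \<delta> \<le> 1" using sm by simp
    have part1: "\<forall>t\<in>II. 3/2 \<le> gd \<phi> F DF t \<and> \<bar>wf \<phi> F DF t\<bar> \<le> 1" using gdb wb unfolding w_def by blast
    have part2: "\<forall>i. 1 \<le> i \<and> i \<le> k \<longrightarrow> (\<exists>Rem. Cf L (k - i) (C1 * \<delta>) Rem \<and>
        (\<forall>t\<in>II. (Top (wf \<phi> F DF) ^^ (i - 1)) (f1f \<phi> F DF) t = DF i t / 2 ^ (i + 1) + Rem t))"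
    proof (intro allI impI)
    fix i assume i: "1 \<le> i \<and> i \<le> k"
    define j where "j = i - 1"
    have j: "j \<le> m" "i = Suc j" using i m unfolding j_def by auto
    obtain R where R: "Cf L (m - j) (Kl * 1 * (cr * \<delta>)) R"
      "\<forall>x\<in>II. (Top w ^^ j) (f1f \<phi> F DF) x = (Dv ^^ j) (f1f \<phi> F DF) x / 2 ^ j + R x"
      using Kl(2) j(1) f1C rC rho1 wr by blast
    have DSC: "Cf L (m - j) (cS * \<delta>) ((Dv ^^ j) S)" using Dvpow_Cf[OF SC j(1)] .
    define Rem where "Rem = (\<lambda>t. (1 / 2 ^ j) * (Dv ^^ j) S t + R t)"
    have RemC0: "Cf L (m - j) (\<bar>1 / 2 ^ j\<bar> * (cS * \<delta>) + Kl * 1 * (cr * \<delta>)) Rem"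
      unfolding Rem_def using Cf_add[OF Cf_scale[OF DSC] R(1)] .
    have "\<bar>1 / 2 ^ j\<bar> * (cS * \<delta>) + Kl * 1 * (cr * \<delta>) \<le> C1 * \<delta>"
    proof -
      have "\<bar>1 / 2 ^ j\<bar> * (cS * \<delta>) \<le> 1 * (cS * \<delta>)"
        using cS0 dpos by (intro mult_right_mono) auto
      then show ?thesis unfolding C1_def by (simp add: algebra_simps)
    qed
    then have RemC: "Cf L (k - i) (C1 * \<delta>) Rem" using Cf_mono[OF RemC0] j m by simp
    have eq: "(Top (wf \<phi> F DF) ^^ (i - 1)) (f1f \<phi> F DF) t = DF i t / 2 ^ (i + 1) + Rem t" if t: "t \<in> II" for t
    proof -
      have "(Dv ^^ j) (f1f \<phi> F DF) t = 1/4 * (Dv ^^ j) (DF 1) t + (Dv ^^ j) S t"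
        unfolding f1E using Dvpow_lin[OF DF1 SC j(1) t] .
      also have "(Dv ^^ j) (DF 1) t = DF (1 + j) t" using Dvpow_family[OF CkI _ t, of 1 j] j m by simp
      finally have e: "(Dv ^^ j) (f1f \<phi> F DF) t = 1/4 * DF i t + (Dv ^^ j) S t" using j by simp
      have "(Top (wf \<phi> F DF) ^^ (i - 1)) (f1f \<phi> F DF) t = (Dv ^^ j) (f1f \<phi> F DF) t / 2 ^ j + R t"
        using R(2) t unfolding w_def j_def by blast
      also have "\<dots> = DF i t / 2 ^ (i + 1) + Rem t" unfolding e Rem_def using j by (simp add: field_simps)
      finally show ?thesis .
    qed
    show "\<exists>Rem. Cf L (k - i) (C1 * \<delta>) Rem \<and>
        (\<forall>t\<in>II. (Top (wf \<phi> F DF) ^^ (i - 1)) (f1f \<phi> F DF) t = DF i t / 2 ^ (i + 1) + Rem t)"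
      using RemC eq by blast
    qed
    show "(\<forall>t\<in>II. 3/2 \<le> gd \<phi> F DF t \<and> \<bar>wf \<phi> F DF t\<bar> \<le> 1) \<and>
    (\<forall>i. 1 \<le> i \<and> i \<le> k \<longrightarrow> (\<exists>Rem. Cf L (k - i) (C1 * \<delta>) Rem \<and>
        (\<forall>t\<in>II. (Top (wf \<phi> F DF) ^^ (i - 1)) (f1f \<phi> F DF) t = DF i t / 2 ^ (i + 1) + Rem t)))"
      using part1 part2 by blast
  qed
qed

definition concl :: "nat \<Rightarrow> (real \<times> real \<Rightarrow> real \<times> real) \<Rightarrow> (real \<Rightarrow> real) \<Rightarrow> (nat \<Rightarrow> real \<Rightarrow> real) \<Rightarrow> real \<Rightarrow> real \<Rightarrow> bool" where
  "concl k \<phi> F DF \<delta> C \<longleftrightarrow>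
      (\<exists>H DH. \<phi> ` graph_u F \<inter> {p. \<bar>fst p\<bar> \<le> 1} = graph_u H \<and>
         Ck_interval k H DH \<and>
         Ck_seminorm k DH \<le> Ck_seminorm k DF / 4 + C * \<delta> \<and>
         (Ck1_seminorm k DF \<le> 1 \<and>
          (\<forall>x\<in>{-1..1}. \<forall>y\<in>{-1..1}. \<bar>DF k x - DF k y\<bar> \<le> \<bar>x - y\<bar>)
          \<longrightarrow>
          (\<forall>x\<in>{-1..1}. \<forall>y\<in>{-1..1}. x \<noteq> y \<longrightarrow>
             \<bar>DH k x - DH k y\<bar> / \<bar>x - y\<bar> \<le> Ck1_seminorm k DF / 4 + C * \<delta>) \<and>
          Ck1_seminorm k DH \<le> Ck1_seminorm k DF / 4 + C * \<delta>))"

lemma concl_mono: assumes "concl k \<phi> F DF \<delta> C" "0 < \<delta>" "C \<le> C'" shows "concl k \<phi> F DF \<delta> C'"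
proof -
  have "C * \<delta> \<le> C' * \<delta>" using assms by (intro mult_right_mono) auto
  then show ?thesis using assms(1) unfolding concl_def
    by (smt (verit, best))
qed

lemma main_k:
  assumes k: "1 \<le> k"
  shows "\<exists>\<delta>0>0. \<exists>C>0. \<forall>U \<phi> \<delta> F DF. hyp k U \<phi> \<delta> \<and> \<delta> \<le> \<delta>0 \<and> Ck_interval k F DF \<and> F 0 = 0 \<and>
     Ck_seminorm k DF \<le> 1 \<longrightarrow> concl k \<phi> F DF \<delta> C"
proof -
  obtain \<delta>F CF where PF: "\<delta>F > 0" "CF > 0" "\<forall>U \<phi> \<delta> F DF. hyp k U \<phi> \<delta> \<and> \<delta> \<le> \<delta>F \<and> Ck_interval k F DF \<and>
    (\<forall>j\<le>k. \<forall>x\<in>II. \<bar>DF j x\<bar> \<le> 1) \<and> (False \<longrightarrow> (\<forall>x\<in>II. \<forall>y\<in>II. \<bar>DF k x - DF k y\<bar> \<le> \<bar>x - y\<bar>)) \<longrightarrow>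
    (\<forall>t\<in>II. 3/2 \<le> gd \<phi> F DF t \<and> \<bar>wf \<phi> F DF t\<bar> \<le> 1) \<and>
    (\<forall>i. 1 \<le> i \<and> i \<le> k \<longrightarrow> (\<exists>Rem. Cf False (k - i) (CF * \<delta>) Rem \<and>
        (\<forall>t\<in>II. (Top (wf \<phi> F DF) ^^ (i - 1)) (f1f \<phi> F DF) t = DF i t / 2 ^ (i + 1) + Rem t)))"
    using pipeline[OF k, of False] by blast
  obtain \<delta>T CT where PT: "\<delta>T > 0" "CT > 0" "\<forall>U \<phi> \<delta> F DF. hyp k U \<phi> \<delta> \<and> \<delta> \<le> \<delta>T \<and> Ck_interval k F DF \<and>
    (\<forall>j\<le>k. \<forall>x\<in>II. \<bar>DF j x\<bar> \<le> 1) \<and> (True \<longrightarrow> (\<forall>x\<in>II. \<forall>y\<in>II. \<bar>DF k x - DF k y\<bar> \<le> \<bar>x - y\<bar>)) \<longrightarrow>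
    (\<forall>t\<in>II. 3/2 \<le> gd \<phi> F DF t \<and> \<bar>wf \<phi> F DF t\<bar> \<le> 1) \<and>
    (\<forall>i. 1 \<le> i \<and> i \<le> k \<longrightarrow> (\<exists>Rem. Cf True (k - i) (CT * \<delta>) Rem \<and>
        (\<forall>t\<in>II. (Top (wf \<phi> F DF) ^^ (i - 1)) (f1f \<phi> F DF) t = DF i t / 2 ^ (i + 1) + Rem t)))"
    using pipeline[OF k, of True] by blast
  define \<delta>0 where "\<delta>0 = min \<delta>F \<delta>T"
  define C where "C = max CF CT"
  have d00: "\<delta>0 > 0" unfolding \<delta>0_def using PF PT by simp
  have C0: "C > 0" unfolding C_def using PF by simp
  show ?thesis
  proof (rule exI[of _ \<delta>0], rule conjI[OF d00], rule exI[of _ C], rule conjI[OF C0], intro allI impI)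
    fix U \<phi> \<delta> F DF
    assume A: "hyp k U \<phi> \<delta> \<and> \<delta> \<le> \<delta>0 \<and> Ck_interval k F DF \<and> F 0 = 0 \<and> Ck_seminorm k DF \<le> 1"
    have h: "hyp k U \<phi> \<delta>" and dF: "\<delta> \<le> \<delta>F" and dT: "\<delta> \<le> \<delta>T" and CkI: "Ck_interval k F DF"
      and F00: "F 0 = 0" and sem1: "Ck_seminorm k DF \<le> 1" using A unfolding \<delta>0_def by auto
    have dpos: "0 < \<delta>" using h unfolding hyp_def by blast
    have U: "open U" "unit_box \<subseteq> U" using h unfolding hyp_def by auto
    have C1: "Cm_on (Suc k) (fst \<circ> \<phi>) U" "Cm_on (Suc k) (snd \<circ> \<phi>) U" using h unfolding hyp_def by auto
    have DF0: "DF 0 = F" using CkI unfolding Ck_interval_def by blast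
    have DFd: "\<And>j x. j < k \<Longrightarrow> x \<in> II \<Longrightarrow> (DF j has_real_derivative DF (Suc j) x) (at x within II)"
      using CkI unfolding Ck_interval_def by blast
    have DFc: "\<forall>j\<le>k. continuous_on II (DF j)" using CkI unfolding Ck_interval_def by blast
    have semb: "\<And>j x. 1 \<le> j \<Longrightarrow> j \<le> k \<Longrightarrow> x \<in> II \<Longrightarrow> \<bar>DF j x\<bar> \<le> Ck_seminorm k DF"
      using Ck_sem_upper[OF DFc] by blast
    have s0: "0 \<le> Ck_seminorm k DF" using semb[of 1 0] k by force
    have Fd: "\<And>x. x \<in> II \<Longrightarrow> (F has_real_derivative DF 1 x) (at x within II)"
      using DFd[of 0] k DF0 by auto
    have Fb: "\<bar>F x\<bar> \<le> 1" if "x \<in> II" for x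
    proof -
      have "\<bar>F x - F 0\<bar> \<le> 1 * \<bar>x - 0\<bar>"
        using Lip_of_deriv[of F "DF 1" 1 x 0] Fd semb[of 1] sem1 k that by force
      then show ?thesis using F00 that by auto
    qed
    have DFb: "\<forall>j\<le>k. \<forall>x\<in>II. \<bar>DF j x\<bar> \<le> 1"
    proof (intro allI impI ballI)
      fix j x assume j: "j \<le> k" and x: "x \<in> II"
      show "\<bar>DF j x\<bar> \<le> 1"
      proof (cases "j = 0")
        case True then show ?thesis using Fb x DF0 by simp
      next
        case False then show ?thesis using semb[of j x] sem1 j x by simp
      qed
    qed
    have PFi: "(\<forall>t\<in>II. 3/2 \<le> gd \<phi> F DF t \<and> \<bar>wf \<phi> F DF t\<bar> \<le> 1) \<and>
    (\<forall>i. 1 \<le> i \<and> i \<le> k \<longrightarrow> (\<exists>Rem. Cf False (k - i) (CF * \<delta>) Rem \<and>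
        (\<forall>t\<in>II. (Top (wf \<phi> F DF) ^^ (i - 1)) (f1f \<phi> F DF) t = DF i t / 2 ^ (i + 1) + Rem t)))"
      using PF(3) h dF CkI DFb by blast
    have gdb: "\<And>t. t \<in> II \<Longrightarrow> 3/2 \<le> gd \<phi> F DF t" and wb: "\<And>t. t \<in> II \<Longrightarrow> \<bar>wf \<phi> F DF t\<bar> \<le> 1"
      using PFi by auto
    define g where "g = (\<lambda>t. fst (\<phi> (t, F t)))"
    define hh where "hh = (\<lambda>t. snd (\<phi> (t, F t)))"
    have gder: "(g has_real_derivative gd \<phi> F DF t) (at t within II)" if t: "t \<in> II" for t
      using curve_deriv[OF C1(1) U t Fb[OF t] Fd[OF t]] unfolding g_def gd_def by (simp add: o_def)
    have hder: "(hh has_real_derivative hdd \<phi> F DF t) (at t within II)" if t: "t \<in> II" for t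
      using curve_deriv[OF C1(2) U t Fb[OF t] Fd[OF t]] unfolding hh_def hdd_def by (simp add: o_def)
    have g0: "g 0 = 0" unfolding g_def using F00 h unfolding hyp_def by simp
    obtain u where u1: "\<And>x. x \<in> II \<Longrightarrow> u x \<in> {-2/3..2/3} \<and> g (u x) = x"
      and u2: "\<And>t. t \<in> II \<Longrightarrow> \<bar>g t\<bar> \<le> 1 \<Longrightarrow> u (g t) = t"
      and u3: "\<And>x. x \<in> II \<Longrightarrow> (u has_real_derivative inverse (gd \<phi> F DF (u x))) (at x within II)"
      using inv_fun[of g "gd \<phi> F DF", OF gder gdb g0] by blast
    define w where "w = wf \<phi> F DF"
    define f1 where "f1 = f1f \<phi> F DF"
    have uII: "u x \<in> II" "-1 < u x" "u x < 1" if "x \<in> II" for x using u1[OF that] by auto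
    have ud: "(u has_real_derivative w (u x)) (at x within II)" if "x \<in> II" for x
      using u3[OF that] unfolding w_def wf_def by (simp add: inverse_eq_divide)
    have uc: "continuous_on II u" by (rule deriv_cont[OF ud])
    have uLip: "\<bar>u x - u y\<bar> \<le> \<bar>x - y\<bar>" if "x \<in> II" "y \<in> II" for x y
      using Lip_of_deriv[of u "\<lambda>x. w (u x)" 1 x y] ud wb uII that unfolding w_def by auto
    have atu: "at (u x) within II = at (u x)" if "x \<in> II" for x
      using uII[OF that] by (intro at_within_Icc_at) auto
    define G where "G = (\<lambda>j. (Top w ^^ (j - 1)) f1)"
    define H where "H = (\<lambda>x. hh (u x))"
    define DH where "DH = (\<lambda>j x. if j = 0 then hh (u x) else G j (u x))"
    have GF: "\<exists>Rem. Cf False (k - j) (CF * \<delta>) Rem \<and> (\<forall>t\<in>II. G j t = DF j t / 2 ^ (j + 1) + Rem t)"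
      if "1 \<le> j" "j \<le> k" for j
      using PFi that unfolding G_def w_def f1_def by blast
    have GC: "\<exists>B. Cf False (k - j) B (G j)" if j: "1 \<le> j" "j \<le> k" for j
    proof -
      obtain Rem where R: "Cf False (k - j) (CF * \<delta>) Rem" "\<forall>t\<in>II. G j t = DF j t / 2 ^ (j + 1) + Rem t"
        using GF[OF j] by blast
      have "Cf False (k - j) 1 (DF j)" using Ck_Cf[OF CkI DFb, where L=False and i=j] j by simp
      then have "Cf False (k - j) (\<bar>1 / 2 ^ (j + 1)\<bar> * 1 + CF * \<delta>) (\<lambda>t. 1 / 2 ^ (j + 1) * DF j t + Rem t)"
        using Cf_add[OF Cf_scale R(1)] by blast
      then have "Cf False (k - j) (\<bar>1 / 2 ^ (j + 1)\<bar> * 1 + CF * \<delta>) (G j)"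
        by (rule Cf_cong) (use R(2) in auto)
      then show ?thesis by blast
    qed
    have graph: "\<phi> ` graph_u F \<inter> {p. \<bar>fst p\<bar> \<le> 1} = graph_u H"
    proof
      show "\<phi> ` graph_u F \<inter> {p. \<bar>fst p\<bar> \<le> 1} \<subseteq> graph_u H"
      proof
        fix p assume p: "p \<in> \<phi> ` graph_u F \<inter> {p. \<bar>fst p\<bar> \<le> 1}"
        then obtain t where t: "\<bar>t\<bar> \<le> 1" "p = \<phi> (t, F t)" unfolding graph_u_def by auto
        have tI: "t \<in> II" using t by auto
        have gt: "\<bar>g t\<bar> \<le> 1" using p t unfolding g_def by auto
        have "u (g t) = t" using u2[OF tI gt] .
        then have "p = (g t, H (g t))" unfolding H_def g_def hh_def using t by (simp add: prod_eq_iff)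
        then show "p \<in> graph_u H" unfolding graph_u_def using gt by auto
      qed
      show "graph_u H \<subseteq> \<phi> ` graph_u F \<inter> {p. \<bar>fst p\<bar> \<le> 1}"
      proof
        fix p assume "p \<in> graph_u H"
        then obtain x where x: "\<bar>x\<bar> \<le> 1" "p = (x, H x)" unfolding graph_u_def by auto
        have xI: "x \<in> II" using x by auto
        have "(u x, F (u x)) \<in> graph_u F" unfolding graph_u_def using uII[OF xI] by auto
        moreover have "\<phi> (u x, F (u x)) = p"
          using u1[OF xI] x unfolding g_def H_def hh_def by (simp add: prod_eq_iff)
        ultimately show "p \<in> \<phi> ` graph_u F \<inter> {p. \<bar>fst p\<bar> \<le> 1}" using x by force
      qed
    qed
    have hc: "continuous_on II hh" by (rule deriv_cont[OF hder])
    have contcomp: "continuous_on II (\<lambda>x. f (u x))" if "continuous_on II f" for f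
      by (rule continuous_on_compose2[OF that uc]) (use uII in auto)
    have CkH: "Ck_interval k H DH"
      unfolding Ck_interval_def
    proof (intro conjI allI impI ballI)
      show "DH 0 = H" unfolding DH_def H_def by auto
    next
      fix j x assume j: "j < k" and x: "x \<in> II"
      show "(DH j has_real_derivative DH (Suc j) x) (at x within II)"
      proof (cases "j = 0")
        case True
        have "DERIV hh (u x) :> hdd \<phi> F DF (u x)" using hder[OF uII(1)[OF x]] atu[OF x] by simp
        from DERIV_chain2[OF this ud[OF x]]
        have "((\<lambda>x. hh (u x)) has_real_derivative hdd \<phi> F DF (u x) * w (u x)) (at x within II)" .
        moreover have "hdd \<phi> F DF (u x) * w (u x) = DH (Suc j) x"
          unfolding DH_def G_def True f1_def f1f_def w_def by simp
        ultimately show ?thesis unfolding DH_def True by simp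
      next
        case False
        then have j1: "1 \<le> j" "j \<le> k" using j by auto
        obtain B where B: "Cf False (k - j) B (G j)" using GC[OF j1] by blast
        have "Cf False (Suc (k - j - 1)) B (G j)" using B j by (simp add: Suc_diff_Suc)
        then have "(G j has_real_derivative Dv (G j) (u x)) (at (u x) within II)"
          using Cf_Dv(2) uII(1)[OF x] by blast
        then have "DERIV (G j) (u x) :> Dv (G j) (u x)" using atu[OF x] by simp
        from DERIV_chain2[OF this ud[OF x]]
        have "((\<lambda>x. G j (u x)) has_real_derivative Dv (G j) (u x) * w (u x)) (at x within II)" .
        moreover have "Dv (G j) (u x) * w (u x) = G (Suc j) (u x)"
        proof -
          have "G (Suc j) = Top w (G j)" unfolding G_def using j1 by (cases j) auto
          then show ?thesis by (simp add: Top_def)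
        qed
        ultimately show ?thesis unfolding DH_def using False by simp
      qed
    next
      fix j assume j: "j \<le> k"
      show "continuous_on II (DH j)"
      proof (cases "j = 0")
        case True then show ?thesis unfolding DH_def using contcomp[OF hc] by simp
      next
        case False
        then obtain B where "Cf False (k - j) B (G j)" using GC j by force
        then show ?thesis unfolding DH_def using contcomp[OF Cf_cont] False by auto
      qed
    qed
    have DHb: "\<bar>DH j x\<bar> \<le> Ck_seminorm k DF / 4 + C * \<delta>" if j: "1 \<le> j" "j \<le> k" and x: "x \<in> II" for j x
    proof -
      obtain Rem where R: "Cf False (k - j) (CF * \<delta>) Rem" "\<forall>t\<in>II. G j t = DF j t / 2 ^ (j + 1) + Rem t"
        using GF[OF j] by blast
      have e: "DH j x = DF j (u x) / 2 ^ (j + 1) + Rem (u x)" unfolding DH_def using j R(2) uII[OF x] by auto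
      have "\<bar>DF j (u x) / 2 ^ (j + 1)\<bar> \<le> Ck_seminorm k DF / 2 ^ (j + 1)"
        using semb[OF j uII(1)[OF x]] by (simp add: abs_div divide_right_mono)
      also have "\<dots> \<le> Ck_seminorm k DF / 4"
      proof (rule divide_left_mono[OF _ s0])
        have "(2::real) ^ 2 \<le> 2 ^ (j + 1)" using j by (intro power_increasing) auto
        then show "4 \<le> (2::real) ^ (j + 1)" by simp
      qed simp
      finally have 1: "\<bar>DF j (u x) / 2 ^ (j + 1)\<bar> \<le> Ck_seminorm k DF / 4" .
      have 2: "\<bar>Rem (u x)\<bar> \<le> C * \<delta>"
        using Cf_bound[OF R(1) uII(1)[OF x]] dpos unfolding C_def by (smt (verit) max.cobounded1 mult_right_mono)
      show ?thesis unfolding e using 1 2 abs_triangle_ineq[of "DF j (u x) / 2 ^ (j + 1)" "Rem (u x)"] by linarith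
    qed
    have semH: "Ck_seminorm k DH \<le> Ck_seminorm k DF / 4 + C * \<delta>"
      by (rule Ck_sem_le[OF k]) (use DHb in auto)
    have lip: "(\<forall>x\<in>{-1..1}. \<forall>y\<in>{-1..1}. x \<noteq> y \<longrightarrow>
             \<bar>DH k x - DH k y\<bar> / \<bar>x - y\<bar> \<le> Ck1_seminorm k DF / 4 + C * \<delta>) \<and>
          Ck1_seminorm k DH \<le> Ck1_seminorm k DF / 4 + C * \<delta>"
      if LA: "Ck1_seminorm k DF \<le> 1 \<and> (\<forall>x\<in>{-1..1}. \<forall>y\<in>{-1..1}. \<bar>DF k x - DF k y\<bar> \<le> \<bar>x - y\<bar>)"
    proof -
      have L1: "\<forall>x\<in>II. \<forall>y\<in>II. \<bar>DF k x - DF k y\<bar> \<le> \<bar>x - y\<bar>" using LA by blast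
      have L1': "\<forall>x\<in>II. \<forall>y\<in>II. \<bar>DF k x - DF k y\<bar> \<le> 1 * \<bar>x - y\<bar>" using L1 by simp
      have PTi: "\<forall>i. 1 \<le> i \<and> i \<le> k \<longrightarrow> (\<exists>Rem. Cf True (k - i) (CT * \<delta>) Rem \<and>
          (\<forall>t\<in>II. (Top (wf \<phi> F DF) ^^ (i - 1)) (f1f \<phi> F DF) t = DF i t / 2 ^ (i + 1) + Rem t))"
        using PT(3) h dT CkI DFb L1 by blast
      obtain Rem where R: "Cf True (k - k) (CT * \<delta>) Rem" "\<forall>t\<in>II. G k t = DF k t / 2 ^ (k + 1) + Rem t"
        using PTi k unfolding G_def w_def f1_def by blast
      define l where "l = Lip_seminorm k DF"
      have l0: "0 \<le> l" unfolding l_def using Lip_sem_nonneg[where D=DF and k=k and M=1, OF L1'] .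
      have lup: "\<bar>DF k a - DF k b\<bar> \<le> l * \<bar>a - b\<bar>" if "a \<in> II" "b \<in> II" for a b
        unfolding l_def using Lip_sem_upper[where D=DF and k=k and M=1, OF L1' that] .
      have l1: "l \<le> Ck1_seminorm k DF" unfolding l_def Ck1_seminorm_def by simp
      have CTC: "CT * \<delta> \<le> C * \<delta>" unfolding C_def using dpos by (intro mult_right_mono) auto
      have q: "\<bar>DH k x - DH k y\<bar> \<le> (Ck1_seminorm k DF / 4 + C * \<delta>) * \<bar>x - y\<bar>" if xy: "x \<in> II" "y \<in> II" for x y
      proof -
        define a where "a = u x"
        define b where "b = u y"
        have ab: "a \<in> II" "b \<in> II" unfolding a_def b_def using uII xy by auto
        have Ga: "G k a = DF k a / 2 ^ (k + 1) + Rem a" using R(2) ab by blast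
        have Gb: "G k b = DF k b / 2 ^ (k + 1) + Rem b" using R(2) ab by blast
        have "DH k x = G k a" "DH k y = G k b" unfolding DH_def a_def b_def using k by auto
        then have e: "DH k x - DH k y = (DF k a - DF k b) / 2 ^ (k + 1) + (Rem a - Rem b)"
          unfolding Ga Gb by (simp add: diff_divide_distrib)
        have "\<bar>(DF k a - DF k b) / 2 ^ (k + 1)\<bar> \<le> l * \<bar>a - b\<bar> / 2 ^ (k + 1)"
          using lup[OF ab] by (simp add: abs_div divide_right_mono)
        also have "\<dots> \<le> l * \<bar>a - b\<bar> / 4"
        proof (rule divide_left_mono)
          have "(2::real) ^ 2 \<le> 2 ^ (k + 1)" using k by (intro power_increasing) auto
          then show "4 \<le> (2::real) ^ (k + 1)" by simp
        qed (use l0 in auto)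
        finally have 1: "\<bar>(DF k a - DF k b) / 2 ^ (k + 1)\<bar> \<le> l / 4 * \<bar>a - b\<bar>" by simp
        have 2: "\<bar>Rem a - Rem b\<bar> \<le> CT * \<delta> * \<bar>a - b\<bar>" using Cf_Lip[OF R(1) ab] .
        have "\<bar>DH k x - DH k y\<bar> \<le> l / 4 * \<bar>a - b\<bar> + CT * \<delta> * \<bar>a - b\<bar>"
          unfolding e using 1 2 abs_triangle_ineq[of "(DF k a - DF k b) / 2 ^ (k + 1)" "Rem a - Rem b"] by linarith
        also have "\<dots> = (l / 4 + CT * \<delta>) * \<bar>a - b\<bar>" by (simp add: algebra_simps)
        also have "\<dots> \<le> (Ck1_seminorm k DF / 4 + C * \<delta>) * \<bar>x - y\<bar>"
        proof (rule mult_mono)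
          show "l / 4 + CT * \<delta> \<le> Ck1_seminorm k DF / 4 + C * \<delta>" using l1 CTC by simp
          show "\<bar>a - b\<bar> \<le> \<bar>x - y\<bar>" unfolding a_def b_def using uLip xy by blast
          show "0 \<le> Ck1_seminorm k DF / 4 + C * \<delta>" using l0 l1 C0 dpos by (smt (verit) divide_nonneg_pos mult_pos_pos)
        qed simp
        finally show ?thesis .
      qed
      have part1: "\<forall>x\<in>{-1..1}. \<forall>y\<in>{-1..1}. x \<noteq> y \<longrightarrow>
             \<bar>DH k x - DH k y\<bar> / \<bar>x - y\<bar> \<le> Ck1_seminorm k DF / 4 + C * \<delta>"
        using q by (auto simp: divide_le_eq)
      have "Lip_seminorm k DH \<le> Ck1_seminorm k DF / 4 + C * \<delta>"
        by (rule Lip_sem_le) (use part1 in auto)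
      moreover have "Ck_seminorm k DH \<le> Ck1_seminorm k DF / 4 + C * \<delta>"
        using semH unfolding Ck1_seminorm_def by (smt (verit) max.cobounded1 divide_right_mono)
      ultimately have "Ck1_seminorm k DH \<le> Ck1_seminorm k DF / 4 + C * \<delta>"
        unfolding Ck1_seminorm_def[of k DH] by simp
      then show ?thesis using part1 by blast
    qed
    show "concl k \<phi> F DF \<delta> C"
      unfolding concl_def using graph CkH semH lip by blast
  qed
qed

theorem lemma2p4:
  fixes N :: nat
  assumes "N \<ge> 1"
  shows "\<exists>\<delta>0 C :: real. \<delta>0 > 0 \<and> C > 0 \<and>
    (\<forall>(U :: (real \<times> real) set) (V :: (real \<times> real) set)
       (\<phi> :: real \<times> real \<Rightarrow> real \<times> real) (\<delta> :: real) (k :: nat)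
       (F :: real \<Rightarrow> real) (DF :: nat \<Rightarrow> real \<Rightarrow> real).
      open U \<and> open V \<and> unit_box \<subseteq> U \<inter> V \<and>
      diffeo_onto_image (N + 1) \<phi> U V \<and>
      \<phi> (0, 0) = (0, 0) \<and>
      (\<phi> has_derivative (\<lambda>(x1, x2). (2 * x1, x2 / 2))) (at (0, 0)) \<and>
      (\<forall>ds. 2 \<le> length ds \<and> length ds \<le> N + 1 \<longrightarrow>
         (\<forall>p\<in>U. \<bar>iter_partial ds (fst \<circ> \<phi>) p\<bar> \<le> \<delta> \<and>
                 \<bar>iter_partial ds (snd \<circ> \<phi>) p\<bar> \<le> \<delta>)) \<and>
      0 < \<delta> \<and> \<delta> \<le> \<delta>0 \<and>
      1 \<le> k \<and> k \<le> N \<and>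
      Ck_interval k F DF \<and> F 0 = 0 \<and> Ck_seminorm k DF \<le> 1
      \<longrightarrow>
      (\<exists>H DH. \<phi> ` graph_u F \<inter> {p. \<bar>fst p\<bar> \<le> 1} = graph_u H \<and>
         Ck_interval k H DH \<and>
         Ck_seminorm k DH \<le> Ck_seminorm k DF / 4 + C * \<delta> \<and>
         (Ck1_seminorm k DF \<le> 1 \<and>
          (\<forall>x\<in>{-1..1}. \<forall>y\<in>{-1..1}. \<bar>DF k x - DF k y\<bar> \<le> \<bar>x - y\<bar>)
          \<longrightarrow>
          (\<forall>x\<in>{-1..1}. \<forall>y\<in>{-1..1}. x \<noteq> y \<longrightarrow>
             \<bar>DH k x - DH k y\<bar> / \<bar>x - y\<bar> \<le> Ck1_seminorm k DF / 4 + C * \<delta>) \<and>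
          Ck1_seminorm k DH \<le> Ck1_seminorm k DF / 4 + C * \<delta>)))"
proof -
  define P where "P = (\<lambda>k K. 0 < K \<and> (1 \<le> k \<longrightarrow> (\<forall>U \<phi> \<delta> F DF. hyp k U \<phi> \<delta> \<and> \<delta> \<le> 1 / K \<and>
     Ck_interval k F DF \<and> F 0 = 0 \<and> Ck_seminorm k DF \<le> 1 \<longrightarrow> concl k \<phi> F DF \<delta> K)))"
  have ex: "\<exists>K>0. P k K" if "k \<le> N" for k
  proof (cases "1 \<le> k")
    case False
    then show ?thesis unfolding P_def by (intro exI[of _ 1]) auto
  next
    case True
    obtain \<delta>0 C where dc: "\<delta>0 > 0" "C > 0" "\<forall>U \<phi> \<delta> F DF. hyp k U \<phi> \<delta> \<and> \<delta> \<le> \<delta>0 \<and> Ck_interval k F DF \<and> F 0 = 0 \<and>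
     Ck_seminorm k DF \<le> 1 \<longrightarrow> concl k \<phi> F DF \<delta> C" using main_k[OF True] by blast
    define K where "K = max C (1 / \<delta>0)"
    have K0: "K > 0" unfolding K_def using dc by simp
    have Kd: "1 / K \<le> \<delta>0"
    proof -
      have "1 / \<delta>0 \<le> K" unfolding K_def by simp
      then have "1 / K \<le> 1 / (1 / \<delta>0)" using dc K0 by (intro divide_left_mono) auto
      then show ?thesis using dc by simp
    qed
    have "P k K" unfolding P_def
    proof (intro conjI K0 impI allI)
      fix U \<phi> \<delta> F DF assume a: "hyp k U \<phi> \<delta> \<and> \<delta> \<le> 1 / K \<and> Ck_interval k F DF \<and> F 0 = 0 \<and> Ck_seminorm k DF \<le> 1"
      then have "concl k \<phi> F DF \<delta> C" using dc(3) Kd by force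
      moreover have "0 < \<delta>" using a unfolding hyp_def by blast
      ultimately show "concl k \<phi> F DF \<delta> K" using concl_mono[of k \<phi> F DF \<delta> C K] unfolding K_def by simp
    qed
    then show ?thesis using K0 by blast
  qed
  have mono: "P j K'" if "P j K" "K \<le> K'" for j K K'
  proof -
    have K0: "0 < K" using that unfolding P_def by blast
    have "1 / K' \<le> 1 / K" using K0 that(2) by (intro divide_left_mono) auto
    then show ?thesis using that K0 concl_mono unfolding P_def hyp_def
      by (smt (verit, ccfv_threshold))
  qed
  have "\<exists>K>0. \<forall>j\<le>N. P j K"
  proof (rule uniform_const)
    fix j assume "j \<le> N" then show "\<exists>K>0. P j K" by (rule ex)
  next
    fix j K K' assume "P j K" "K \<le> K'" then show "P j K'" by (rule mono)
  qed
  then obtain K where K: "K > 0" "\<forall>k\<le>N. P k K" by blast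
  show ?thesis
  proof (rule exI[of _ "1 / K"], rule exI[of _ K], intro conjI allI impI)
    show "0 < 1 / K" "0 < K" using K by auto
    fix U V :: "(real \<times> real) set" and \<phi> :: "real \<times> real \<Rightarrow> real \<times> real" and \<delta> :: real and k :: nat
      and F :: "real \<Rightarrow> real" and DF :: "nat \<Rightarrow> real \<Rightarrow> real"
    assume a: "open U \<and> open V \<and> unit_box \<subseteq> U \<inter> V \<and>
      diffeo_onto_image (N + 1) \<phi> U V \<and>
      \<phi> (0, 0) = (0, 0) \<and>
      (\<phi> has_derivative (\<lambda>(x1, x2). (2 * x1, x2 / 2))) (at (0, 0)) \<and>
      (\<forall>ds. 2 \<le> length ds \<and> length ds \<le> N + 1 \<longrightarrow>
         (\<forall>p\<in>U. \<bar>iter_partial ds (fst \<circ> \<phi>) p\<bar> \<le> \<delta> \<and>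
                 \<bar>iter_partial ds (snd \<circ> \<phi>) p\<bar> \<le> \<delta>)) \<and>
      0 < \<delta> \<and> \<delta> \<le> 1 / K \<and>
      1 \<le> k \<and> k \<le> N \<and>
      Ck_interval k F DF \<and> F 0 = 0 \<and> Ck_seminorm k DF \<le> 1"
    have kN: "k \<le> N" "1 \<le> k" using a by auto
    have Cm: "Cm_on (k + 1) (fst \<circ> \<phi>) U" "Cm_on (k + 1) (snd \<circ> \<phi>) U"
      using a kN Cm_on_mono[of "N + 1" _ U "k + 1"] unfolding diffeo_onto_image_def by auto
    have "hyp k U \<phi> \<delta>" unfolding hyp_def using a Cm kN by auto
    then have "concl k \<phi> F DF \<delta> K" using K(2) kN a unfolding P_def by blast
    then show "\<exists>H DH. \<phi> ` graph_u F \<inter> {p. \<bar>fst p\<bar> \<le> 1} = graph_u H \<and>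
         Ck_interval k H DH \<and>
         Ck_seminorm k DH \<le> Ck_seminorm k DF / 4 + K * \<delta> \<and>
         (Ck1_seminorm k DF \<le> 1 \<and>
          (\<forall>x\<in>{-1..1}. \<forall>y\<in>{-1..1}. \<bar>DF k x - DF k y\<bar> \<le> \<bar>x - y\<bar>)
          \<longrightarrow>
          (\<forall>x\<in>{-1..1}. \<forall>y\<in>{-1..1}. x \<noteq> y \<longrightarrow>
             \<bar>DH k x - DH k y\<bar> / \<bar>x - y\<bar> \<le> Ck1_seminorm k DF / 4 + K * \<delta>) \<and>
          Ck1_seminorm k DH \<le> Ck1_seminorm k DF / 4 + K * \<delta>)"
      unfolding concl_def by blast
  qed
qed

end
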